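(* There exist a smooth $4$-dimensional Riemannian manifold $(M^4,g)$ and a compact subset $K\subset M^4$ such that $M^4$ is diffeomorphic to an open subset of $\mathbb{R}^4$, and $(M^4\setminus K,g)$ is isometric to the annulus $A_{e^{200},\infty}=\{y\in C(\mathbb{S}^3/Q_8): d(o,y)>e^{200}\}$ in the metric cone $C(\mathbb{S}^3/Q_8)$ with vertex $o$, where the metric on $\mathbb{S}^3/Q_8$ is a constant rescaling of the standard round metric.
   Context: $Q_8=\{\pm1,\pm i,\pm j,\pm k\}$ is the quaternion group acting freely on the unit sphere $\mathbb{S}^3\subset\mathbb{H}$ by left multiplication; the round metric descends to $\mathbb{S}^3/Q_8$. For a metric space $(Y,d_Y)$, $C(Y)$ is the metric cone over $Y$ (metric $dr^2+r^2d_Y^2$ on $(0,\infty)\times Y$ with the vertex $o$ added). *)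

theory Defs
  imports "HOL-Analysis.Analysis"
begin

text \<open>C-infinity smoothness of a real-valued function on a set (meant for open sets):
  differentiable at every point, and all first partial derivatives (in the directions
  of the standard basis) are again smooth (greatest fixed point).\<close>
coinductive smooth_fun :: "'a::euclidean_space set \<Rightarrow> ('a \<Rightarrow> real) \<Rightarrow> bool" for U where
  "\<lbrakk> \<forall>x\<in>U. f differentiable (at x);
     \<forall>b\<in>Basis. smooth_fun U (\<lambda>x. frechet_derivative f (at x) b) \<rbrakk> \<Longrightarrow> smooth_fun U f"

definition smooth_map4 :: "(real^4) set \<Rightarrow> (real^4 \<Rightarrow> real^4) \<Rightarrow> bool" where
  "smooth_map4 U F \<longleftrightarrow> (\<forall>i. smooth_fun U (\<lambda>x. F x $ i))"

text \<open>A smooth Riemannian metric on an open set U of R^4, given as a field of matrices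
  g x, with g_x(v,w) = v \<bullet> (g x *v w).\<close>
definition riem_metric4 :: "(real^4) set \<Rightarrow> (real^4 \<Rightarrow> real^4^4) \<Rightarrow> bool" where
  "riem_metric4 U g \<longleftrightarrow>
     (\<forall>i j. smooth_fun U (\<lambda>x. g x $ i $ j)) \<and>
     (\<forall>x\<in>U. transpose (g x) = g x \<and> (\<forall>v. v \<noteq> 0 \<longrightarrow> v \<bullet> (g x *v v) > 0))"

definition metric_apply :: "real^4^4 \<Rightarrow> real^4 \<Rightarrow> real^4 \<Rightarrow> real" where
  "metric_apply G v w = v \<bullet> (G *v w)"

text \<open>Quaternion (Hamilton) product on R^4 = H, x = x1 + x2 i + x3 j + x4 k.\<close>
definition hmul :: "real^4 \<Rightarrow> real^4 \<Rightarrow> real^4" where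
  "hmul q x = vector
     [ q$1*x$1 - q$2*x$2 - q$3*x$3 - q$4*x$4,
       q$1*x$2 + q$2*x$1 + q$3*x$4 - q$4*x$3,
       q$1*x$3 - q$2*x$4 + q$3*x$1 + q$4*x$2,
       q$1*x$4 + q$2*x$3 - q$3*x$2 + q$4*x$1 ]"

text \<open>The quaternion group Q8 = {+-1, +-i, +-j, +-k} as a subset of R^4 = H.\<close>
definition Q8 :: "(real^4) set" where
  "Q8 = {vector [1,0,0,0], vector [-1,0,0,0], vector [0,1,0,0], vector [0,-1,0,0],
         vector [0,0,1,0], vector [0,0,-1,0], vector [0,0,0,1], vector [0,0,0,-1]}"

text \<open>Metric of the cone C(S^3, c^2 g_round) = dr^2 + r^2 c^2 g_round, written in Euclidean
  coordinates on R^4 - {0} (r = norm x): radial part plus c^2 times the tangential part.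
  Q8 acts isometrically on it, and its quotient by Q8 is C(S^3/Q8, c^2 g_round) minus the
  vertex; the distance to the vertex of the class of x is norm x.\<close>
definition cone_metric :: "real \<Rightarrow> real^4 \<Rightarrow> real^4 \<Rightarrow> real^4 \<Rightarrow> real" where
  "cone_metric c x v w =
     (x \<bullet> v) * (x \<bullet> w) / (norm x)^2 + c^2 * (v \<bullet> w - (x \<bullet> v) * (x \<bullet> w) / (norm x)^2)"

end

theory Submission
  imports Defs
begin


lemma smooth_funD:
  assumes "smooth_fun U f"
  shows "\<forall>x\<in>U. f differentiable at x" "\<And>b. b \<in> Basis \<Longrightarrow> smooth_fun U (\<lambda>x. frechet_derivative f (at x) b)"
  using assms by (auto elim: smooth_fun.cases)

lemma smooth_fun_diff: "smooth_fun U f \<Longrightarrow> x \<in> U \<Longrightarrow> (f has_derivative frechet_derivative f (at x)) (at x)"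
  using smooth_funD(1) frechet_derivative_works by blast

lemma smooth_funI:
  assumes "\<forall>x\<in>U. f differentiable at x" "\<forall>b\<in>Basis. X (\<lambda>x. frechet_derivative f (at x) b) \<or> smooth_fun U (\<lambda>x. frechet_derivative f (at x) b)"
  shows "\<exists>g. f = g \<and> (\<forall>x\<in>U. g differentiable at x) \<and> (\<forall>b\<in>Basis. X (\<lambda>x. frechet_derivative g (at x) b) \<or> smooth_fun U (\<lambda>x. frechet_derivative g (at x) b))"
  using assms by blast

lemma smooth_cong:
  assumes "open U" "smooth_fun U f" "\<And>x. x \<in> U \<Longrightarrow> f x = g x"
  shows "smooth_fun U g"
proof -
  let ?X = "\<lambda>g. \<exists>f. smooth_fun U f \<and> (\<forall>x\<in>U. f x = g x)"
  have "?X g" using assms by blast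
  then show ?thesis
  proof (coinduction arbitrary: g rule: smooth_fun.coinduct)
    case (smooth_fun g)
    then obtain f where f: "smooth_fun U f" "\<forall>x\<in>U. f x = g x" by blast
    have d: "(g has_derivative frechet_derivative f (at x)) (at x)" if "x \<in> U" for x
      using has_derivative_transform_within_open[OF smooth_fun_diff[OF f(1) that] assms(1) that] f(2) by auto
    have 1: "\<forall>x\<in>U. g differentiable at x" using d differentiable_def by blast
    have 2: "\<forall>b\<in>Basis. ?X (\<lambda>x. frechet_derivative g (at x) b)"
    proof
      fix b :: 'a assume b: "b \<in> Basis"
      have "\<forall>x\<in>U. frechet_derivative f (at x) b = frechet_derivative g (at x) b"
        using d[THEN frechet_derivative_at] by simp
      then show "?X (\<lambda>x. frechet_derivative g (at x) b)"
        using smooth_funD(2)[OF f(1) b] by blast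
    qed
    show ?case apply (rule smooth_funI) using 1 2 by auto
  qed
qed

lemma smooth_subset:
  assumes "smooth_fun U f" "V \<subseteq> U"
  shows "smooth_fun V f"
  using assms(1)
proof (coinduction arbitrary: f rule: smooth_fun.coinduct)
  case (smooth_fun f)
  have 1: "\<forall>x\<in>V. f differentiable at x" using smooth_funD(1)[OF smooth_fun] assms(2) by blast
  have 2: "\<forall>b\<in>Basis. smooth_fun U (\<lambda>x. frechet_derivative f (at x) b)" using smooth_funD(2)[OF smooth_fun] by blast
  show ?case apply (rule smooth_funI) using 1 2 by auto
qed

lemma smooth_local:
  assumes "\<And>y. y \<in> U \<Longrightarrow> \<exists>W. open W \<and> y \<in> W \<and> W \<subseteq> U \<and> smooth_fun W f"
  shows "smooth_fun U f"
proof -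
  let ?X = "\<lambda>f. \<forall>y\<in>U. \<exists>W. open W \<and> y \<in> W \<and> W \<subseteq> U \<and> smooth_fun W f"
  have "?X f" using assms by blast
  then show ?thesis
  proof (coinduction arbitrary: f rule: smooth_fun.coinduct)
    case (smooth_fun f)
    have 1: "\<forall>x\<in>U. f differentiable at x"
    proof
      fix x assume "x \<in> U"
      then obtain W where "x \<in> W" "smooth_fun W f" using smooth_fun by blast
      then show "f differentiable at x" using smooth_funD(1) by blast
    qed
    have 2: "\<forall>b\<in>Basis. ?X (\<lambda>x. frechet_derivative f (at x) b)"
    proof (intro ballI)
      fix b y assume b: "b \<in> (Basis::'a set)" and y: "y \<in> U"
      then obtain W where "open W \<and> y \<in> W \<and> W \<subseteq> U \<and> smooth_fun W f" using smooth_fun by blast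
      then show "\<exists>W. open W \<and> y \<in> W \<and> W \<subseteq> U \<and> smooth_fun W (\<lambda>x. frechet_derivative f (at x) b)"
        using smooth_funD(2)[OF _ b] by blast
    qed
    show ?case apply (rule smooth_funI) using 1 2 by auto
  qed
qed

lemma smooth_linear:
  assumes "linear f"
  shows "smooth_fun U f"
proof -
  let ?X = "\<lambda>g. linear g \<or> (\<exists>c. g = (\<lambda>x. c))"
  have "?X f" using assms by blast
  then show ?thesis
  proof (coinduction arbitrary: f rule: smooth_fun.coinduct)
    case (smooth_fun f)
    then show ?case
    proof
      assume l: "linear f"
      then have "bounded_linear f" by (simp add: linear_conv_bounded_linear)
      then have d: "\<And>x. (f has_derivative f) (at x)" by (rule bounded_linear_imp_has_derivative)
      then have e: "\<And>x. frechet_derivative f (at x) = f" using frechet_derivative_at by metis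
      have 1: "\<forall>x\<in>U. f differentiable at x" using d differentiable_def by blast
      have 2: "\<forall>b\<in>Basis. ?X (\<lambda>x. frechet_derivative f (at x) b)" unfolding e by blast
      show ?thesis apply (rule smooth_funI) using 1 2 by auto
    next
      assume "\<exists>c. f = (\<lambda>x. c)"
      then obtain c where c: "f = (\<lambda>x. c)" by blast
      have d: "\<And>x. (f has_derivative (\<lambda>h. 0)) (at x)" unfolding c by (rule has_derivative_const)
      then have e: "\<And>x. frechet_derivative f (at x) = (\<lambda>h. 0)" using frechet_derivative_at by metis
      have 1: "\<forall>x\<in>U. f differentiable at x" using d differentiable_def by blast
      have 2: "\<forall>b\<in>Basis. ?X (\<lambda>x. frechet_derivative f (at x) b)" unfolding e by blast
      show ?thesis apply (rule smooth_funI) using 1 2 by auto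
    qed
  qed
qed

lemma smooth_const: "smooth_fun (U::'a::euclidean_space set) (\<lambda>x. c)"
proof -
  let ?X = "\<lambda>g. (\<exists>c. g = (\<lambda>x. c))"
  show ?thesis
  proof (rule smooth_fun.coinduct[where X="?X"])
    show "?X (\<lambda>x. c)" by blast
  next
    fix f :: "'a \<Rightarrow> real" assume "?X f"
    then obtain c where c: "f = (\<lambda>x. c)" by blast
    have d: "\<And>x. (f has_derivative (\<lambda>h. 0)) (at x)" unfolding c by (rule has_derivative_const)
    then have e: "\<And>x. frechet_derivative f (at x) = (\<lambda>h. 0)" using frechet_derivative_at by metis
    have 1: "\<forall>x\<in>U. f differentiable at x" using d differentiable_def by blast
    have 2: "\<forall>b\<in>Basis. ?X (\<lambda>x. frechet_derivative f (at x) b)" unfolding e by blast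
    show "\<exists>g. f = g \<and> (\<forall>x\<in>U. g differentiable at x) \<and> (\<forall>b\<in>Basis. ?X (\<lambda>x. frechet_derivative g (at x) b) \<or> smooth_fun U (\<lambda>x. frechet_derivative g (at x) b))"
      apply (rule smooth_funI) using 1 2 by auto
  qed
qed

definition sop :: "(('a \<Rightarrow> real) \<times> ('a \<Rightarrow> real)) list \<Rightarrow> 'a \<Rightarrow> real" where
  "sop ps x = sum_list (map (\<lambda>(a,b). a x * b x) ps)"

lemma sop_deriv:
  assumes "\<forall>(a,b)\<in>set ps. a differentiable at x \<and> b differentiable at x"
  shows "(sop ps has_derivative (\<lambda>h. sum_list (map (\<lambda>(a,b). frechet_derivative a (at x) h * b x + a x * frechet_derivative b (at x) h) ps))) (at x)"
  using assms
proof (induction ps)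
  case Nil
  then show ?case by (simp add: sop_def)
next
  case (Cons p ps)
  obtain a b where p: "p = (a,b)" by fastforce
  have da: "(a has_derivative frechet_derivative a (at x)) (at x)" and db: "(b has_derivative frechet_derivative b (at x)) (at x)"
    using Cons.prems p frechet_derivative_works by auto
  have IH: "(sop ps has_derivative (\<lambda>h. sum_list (map (\<lambda>(a,b). frechet_derivative a (at x) h * b x + a x * frechet_derivative b (at x) h) ps))) (at x)"
    using Cons by auto
  have e: "sop ((a,b)#ps) = (\<lambda>x. a x * b x + sop ps x)" by (auto simp: sop_def)
  show ?case unfolding p e
    apply (rule has_derivative_eq_rhs)
     apply (rule has_derivative_add[OF has_derivative_mult[OF da db] IH])
    by (auto simp: algebra_simps)
qed

lemma smooth_sop:
  fixes U :: "'a::euclidean_space set"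
  assumes "open U" "\<forall>(a,b)\<in>set ps. smooth_fun U a \<and> smooth_fun U b"
  shows "smooth_fun U (sop ps)"
proof -
  let ?X = "\<lambda>g. \<exists>ps. (\<forall>(a,b)\<in>set ps. smooth_fun U a \<and> smooth_fun U b) \<and> (\<forall>x\<in>U. g x = sop ps x)"
  show ?thesis
  proof (rule smooth_fun.coinduct[where X="?X"])
    show "?X (sop ps)" using assms by blast
  next
    fix g :: "'a \<Rightarrow> real" assume "?X g"
    then obtain ps where ps: "\<forall>(a,b)\<in>set ps. smooth_fun U a \<and> smooth_fun U b" "\<forall>x\<in>U. g x = sop ps x" by blast
    define D where "D x h = sum_list (map (\<lambda>(a,b). frechet_derivative a (at x) h * b x + a x * frechet_derivative b (at x) h) ps)" for x h
    have d: "(g has_derivative D x) (at x)" if "x \<in> U" for x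
    proof -
      have "\<forall>(a,b)\<in>set ps. a differentiable at x \<and> b differentiable at x"
        using ps(1) that smooth_funD(1) by fastforce
      from sop_deriv[OF this] have "(sop ps has_derivative D x) (at x)" unfolding D_def .
      then show ?thesis
        using has_derivative_transform_within_open[where f="sop ps" and g=g, OF _ assms(1) that] ps(2) by auto
    qed
    have 1: "\<forall>x\<in>U. g differentiable at x" using d differentiable_def by blast
    have 2: "\<forall>b\<in>Basis. ?X (\<lambda>x. frechet_derivative g (at x) b)"
    proof
      fix e :: 'a assume e: "e \<in> Basis"
      define qs where "qs = concat (map (\<lambda>(a,b). [(\<lambda>x. frechet_derivative a (at x) e, b), (a, \<lambda>x. frechet_derivative b (at x) e)]) ps)"
      have "\<forall>(a,b)\<in>set qs. smooth_fun U a \<and> smooth_fun U b"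
        using ps(1) e smooth_funD(2) unfolding qs_def by fastforce
      moreover have "\<forall>x\<in>U. frechet_derivative g (at x) e = sop qs x"
      proof
        fix x assume x: "x \<in> U"
        have "frechet_derivative g (at x) e = D x e" using d[OF x, THEN frechet_derivative_at] by simp
        also have "\<dots> = sop qs x" unfolding D_def qs_def sop_def
          by (induction ps) auto
        finally show "frechet_derivative g (at x) e = sop qs x" .
      qed
      ultimately show "?X (\<lambda>x. frechet_derivative g (at x) e)" by blast
    qed
    show "\<exists>f. g = f \<and> (\<forall>x\<in>U. f differentiable at x) \<and> (\<forall>b\<in>Basis. ?X (\<lambda>x. frechet_derivative f (at x) b) \<or> smooth_fun U (\<lambda>x. frechet_derivative f (at x) b))"
      apply (rule smooth_funI) using 1 2 by auto
  qed
qed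

lemma smooth_mult:
  assumes "open U" "smooth_fun U f" "smooth_fun U g"
  shows "smooth_fun U (\<lambda>x. f x * g x)"
proof -
  have "smooth_fun U (sop [(f,g)])" using smooth_sop[OF assms(1), of "[(f,g)]"] assms by auto
  then show ?thesis by (rule smooth_cong[OF assms(1)]) (simp add: sop_def)
qed

lemma smooth_add:
  assumes "open U" "smooth_fun U f" "smooth_fun U g"
  shows "smooth_fun U (\<lambda>x. f x + g x)"
proof -
  have "smooth_fun U (sop [(f,\<lambda>x. 1),(g,\<lambda>x. 1)])" using smooth_sop[OF assms(1), of "[(f,\<lambda>x. 1),(g,\<lambda>x. 1)]"] assms smooth_const by auto
  then show ?thesis by (rule smooth_cong[OF assms(1)]) (simp add: sop_def)
qed

lemma smooth_scale:
  assumes "open U" "smooth_fun U f"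
  shows "smooth_fun U (\<lambda>x. c * f x)"
  using smooth_mult[OF assms(1) smooth_const assms(2)] .

lemma smooth_minus:
  assumes "open U" "smooth_fun U f"
  shows "smooth_fun U (\<lambda>x. - f x)"
  using smooth_scale[OF assms, of "-1"] by simp

lemma smooth_diff:
  assumes "open U" "smooth_fun U f" "smooth_fun U g"
  shows "smooth_fun U (\<lambda>x. f x - g x)"
  using smooth_add[OF assms(1,2) smooth_minus[OF assms(1,3)]] by simp

lemma smooth_sum:
  assumes "open U" "finite I" "\<And>i. i \<in> I \<Longrightarrow> smooth_fun U (f i)"
  shows "smooth_fun U (\<lambda>x. \<Sum>i\<in>I. f i x)"
  using assms(2,3)
proof (induction I rule: finite_induct)
  case empty
  then show ?case by (simp add: smooth_const)
next
  case (insert i I)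
  then show ?case using smooth_add[OF assms(1)] by simp
qed

lemma smooth_prod:
  assumes "open U" "finite I" "\<And>i. i \<in> I \<Longrightarrow> smooth_fun U (f i)"
  shows "smooth_fun U (\<lambda>x. \<Prod>i\<in>I. f i x)"
  using assms(2,3)
proof (induction I rule: finite_induct)
  case empty
  then show ?case by (simp add: smooth_const)
next
  case (insert i I)
  then show ?case using smooth_mult[OF assms(1)] by simp
qed

lemma smooth_power:
  assumes "open U" "smooth_fun U f"
  shows "smooth_fun U (\<lambda>x. f x ^ n)"
  using smooth_prod[OF assms(1) finite_atLeastLessThan[of 0 n], of "\<lambda>i. f"] assms by simp


definition ipl :: "('a \<Rightarrow> real) \<Rightarrow> (('a \<Rightarrow> real) \<times> nat) list \<Rightarrow> 'a \<Rightarrow> real" where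
  "ipl f ps x = sum_list (map (\<lambda>(a,k). a x * inverse (f x) ^ k) ps)"

lemma ipl_deriv:
  assumes "\<forall>(a,k)\<in>set ps. a differentiable at x" "f differentiable at x" "f x \<noteq> 0"
  shows "(ipl f ps has_derivative (\<lambda>h. sum_list (map (\<lambda>(a,k). frechet_derivative a (at x) h * inverse (f x) ^ k
        + (- real k * a x * frechet_derivative f (at x) h) * inverse (f x) ^ (k+1)) ps))) (at x)"
  using assms(1)
proof (induction ps)
  case Nil
  then show ?case by (simp add: ipl_def)
next
  case (Cons p ps)
  obtain a k where p: "p = (a,k)" by fastforce
  have da: "(a has_derivative frechet_derivative a (at x)) (at x)"
    using Cons.prems p frechet_derivative_works by auto
  have df: "(f has_derivative frechet_derivative f (at x)) (at x)"
    using assms(2) frechet_derivative_works by auto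
  have IH: "(ipl f ps has_derivative (\<lambda>h. sum_list (map (\<lambda>(a,k). frechet_derivative a (at x) h * inverse (f x) ^ k
        + (- real k * a x * frechet_derivative f (at x) h) * inverse (f x) ^ (k+1)) ps))) (at x)"
    using Cons by auto
  have e: "ipl f ((a,k)#ps) = (\<lambda>x. a x * inverse (f x) ^ k + ipl f ps x)" by (auto simp: ipl_def)
  have di: "((\<lambda>x. inverse (f x) ^ k) has_derivative (\<lambda>h. of_nat k * (- (inverse (f x) * frechet_derivative f (at x) h * inverse (f x))) * inverse (f x) ^ (k - 1))) (at x)"
    by (rule has_derivative_power[OF Deriv.has_derivative_inverse[OF assms(3) df]])
  have alg: "of_nat k * (- (inverse (f x) * h * inverse (f x))) * inverse (f x) ^ (k - 1)
      = - real k * h * inverse (f x) ^ (k+1)" for h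
  proof (cases k)
    case 0 then show ?thesis by simp
  next
    case (Suc m) then show ?thesis by (simp add: algebra_simps)
  qed
  show ?case unfolding p e
    apply (rule has_derivative_eq_rhs)
     apply (rule has_derivative_add[OF has_derivative_mult[OF da di] IH])
    by (simp only: alg) (simp add: algebra_simps)
qed

lemma smooth_inverse:
  fixes U :: "'a::euclidean_space set"
  assumes "open U" "smooth_fun U f" "\<And>x. x \<in> U \<Longrightarrow> f x \<noteq> 0"
  shows "smooth_fun U (\<lambda>x. inverse (f x))"
proof -
  let ?X = "\<lambda>g. \<exists>ps. (\<forall>(a,k)\<in>set ps. smooth_fun U a) \<and> (\<forall>x\<in>U. g x = ipl f ps x)"
  show ?thesis
  proof (rule smooth_fun.coinduct[where X="?X"])
    show "?X (\<lambda>x. inverse (f x))"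
      by (rule exI[of _ "[(\<lambda>x. 1, 1)]"]) (auto simp: ipl_def smooth_const)
  next
    fix g :: "'a \<Rightarrow> real" assume "?X g"
    then obtain ps where ps: "\<forall>(a,k)\<in>set ps. smooth_fun U a" "\<forall>x\<in>U. g x = ipl f ps x" by blast
    define D where "D x h = sum_list (map (\<lambda>(a,k). frechet_derivative a (at x) h * inverse (f x) ^ k
        + (- real k * a x * frechet_derivative f (at x) h) * inverse (f x) ^ (k+1)) ps)" for x h
    have d: "(g has_derivative D x) (at x)" if "x \<in> U" for x
    proof -
      have "\<forall>(a,k)\<in>set ps. a differentiable at x"
        using ps(1) that smooth_funD(1) by fastforce
      from ipl_deriv[OF this] have "(ipl f ps has_derivative D x) (at x)" unfolding D_def
        using smooth_funD(1)[OF assms(2)] assms(3) that by blast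
      then show ?thesis
        using has_derivative_transform_within_open[where f="ipl f ps" and g=g, OF _ assms(1) that] ps(2) by auto
    qed
    have 1: "\<forall>x\<in>U. g differentiable at x" using d differentiable_def by blast
    have 2: "\<forall>b\<in>Basis. ?X (\<lambda>x. frechet_derivative g (at x) b)"
    proof
      fix e :: 'a assume e: "e \<in> Basis"
      define qs where "qs = concat (map (\<lambda>(a,k). [(\<lambda>x. frechet_derivative a (at x) e, k),
           (\<lambda>x. - real k * a x * frechet_derivative f (at x) e, k+1)]) ps)"
      have sf: "smooth_fun U (\<lambda>x. frechet_derivative f (at x) e)" using smooth_funD(2)[OF assms(2) e] .
      have "\<forall>(a,k)\<in>set qs. smooth_fun U a"
      proof -
        have "smooth_fun U (\<lambda>x. frechet_derivative a (at x) e) \<and> smooth_fun U (\<lambda>x. - real k * a x * frechet_derivative f (at x) e)"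
          if "(a,k) \<in> set ps" for a k
        proof -
          have a: "smooth_fun U a" using ps(1) that by auto
          have "smooth_fun U (\<lambda>x. - real k * a x * frechet_derivative f (at x) e)"
            by (rule smooth_mult[OF assms(1) smooth_mult[OF assms(1) smooth_const a] sf])
          then show ?thesis using smooth_funD(2)[OF a e] by simp
        qed
        then show ?thesis unfolding qs_def by fastforce
      qed
      moreover have "\<forall>x\<in>U. frechet_derivative g (at x) e = ipl f qs x"
      proof
        fix x assume x: "x \<in> U"
        have "frechet_derivative g (at x) e = D x e" using d[OF x, THEN frechet_derivative_at] by simp
        also have "\<dots> = ipl f qs x" unfolding D_def qs_def ipl_def
          by (induction ps) auto
        finally show "frechet_derivative g (at x) e = ipl f qs x" .
      qed
      ultimately show "?X (\<lambda>x. frechet_derivative g (at x) e)" by blast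
    qed
    show "\<exists>h. g = h \<and> (\<forall>x\<in>U. h differentiable at x) \<and> (\<forall>b\<in>Basis. ?X (\<lambda>x. frechet_derivative h (at x) b) \<or> smooth_fun U (\<lambda>x. frechet_derivative h (at x) b))"
      apply (rule smooth_funI) using 1 2 by auto
  qed
qed

lemma smooth_divide:
  fixes U :: "'a::euclidean_space set"
  assumes "open U" "smooth_fun U f" "smooth_fun U g" "\<And>x. x \<in> U \<Longrightarrow> g x \<noteq> 0"
  shows "smooth_fun U (\<lambda>x. f x / g x)"
  using smooth_mult[OF assms(1,2) smooth_inverse[OF assms(1,3,4)]] by (simp add: divide_inverse)


lemma smooth_compose:
  fixes G :: "'a::euclidean_space \<Rightarrow> 'b::euclidean_space"
  assumes W: "open W" and V: "open V" and GV: "\<forall>y\<in>W. G y \<in> V"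
    and dG: "\<forall>y\<in>W. (G has_derivative G' y) (at y)"
    and m: "\<forall>k\<in>Basis. \<forall>b\<in>Basis. smooth_fun V (m k b) \<and> (\<forall>y\<in>W. G' y b \<bullet> k = m k b (G y))"
    and h: "smooth_fun V h"
  shows "smooth_fun W (\<lambda>y. h (G y))"
proof -
  let ?X = "\<lambda>f. \<exists>h. smooth_fun V h \<and> (\<forall>y\<in>W. f y = h (G y))"
  show ?thesis
  proof (rule smooth_fun.coinduct[where X="?X"])
    show "?X (\<lambda>y. h (G y))" using h by blast
  next
    fix f :: "'a \<Rightarrow> real" assume "?X f"
    then obtain h where h: "smooth_fun V h" "\<forall>y\<in>W. f y = h (G y)" by blast
    have d: "(f has_derivative (\<lambda>v. frechet_derivative h (at (G y)) (G' y v))) (at y)" if "y \<in> W" for y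
    proof -
      have "((\<lambda>y. h (G y)) has_derivative (\<lambda>v. frechet_derivative h (at (G y)) (G' y v))) (at y)"
        using has_derivative_compose[OF dG[rule_format, OF that] smooth_fun_diff[OF h(1) GV[rule_format, OF that]]] .
      then show ?thesis
        using has_derivative_transform_within_open[where g=f, OF _ W that] h(2) by auto
    qed
    have 1: "\<forall>y\<in>W. f differentiable at y" using d differentiable_def by blast
    have 2: "\<forall>b\<in>Basis. ?X (\<lambda>y. frechet_derivative f (at y) b)"
    proof
      fix b :: 'a assume b: "b \<in> Basis"
      define h' where "h' x = (\<Sum>k\<in>Basis. m k b x * frechet_derivative h (at x) k)" for x
      have "smooth_fun V h'" unfolding h'_def
        apply (rule smooth_sum[OF V finite_Basis])
        apply (rule smooth_mult[OF V])
        using m b smooth_funD(2)[OF h(1)] by auto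
      moreover have "\<forall>y\<in>W. frechet_derivative f (at y) b = h' (G y)"
      proof
        fix y assume y: "y \<in> W"
        have lin: "linear (frechet_derivative h (at (G y)))"
          using smooth_fun_diff[OF h(1) GV[rule_format, OF y]] has_derivative_linear by blast
        have "frechet_derivative f (at y) b = frechet_derivative h (at (G y)) (G' y b)"
          using d[OF y, THEN frechet_derivative_at] by metis
        also have "\<dots> = frechet_derivative h (at (G y)) (\<Sum>k\<in>Basis. (G' y b \<bullet> k) *\<^sub>R k)"
          by (simp add: euclidean_representation)
        also have "\<dots> = (\<Sum>k\<in>Basis. (G' y b \<bullet> k) * frechet_derivative h (at (G y)) k)"
          by (simp add: linear_sum[OF lin] linear_scale[OF lin])
        also have "\<dots> = h' (G y)" unfolding h'_def using m b y by (auto intro!: sum.cong)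
        finally show "frechet_derivative f (at y) b = h' (G y)" .
      qed
      ultimately show "?X (\<lambda>y. frechet_derivative f (at y) b)" by blast
    qed
    show "\<exists>g. f = g \<and> (\<forall>x\<in>W. g differentiable at x) \<and> (\<forall>b\<in>Basis. ?X (\<lambda>x. frechet_derivative g (at x) b) \<or> smooth_fun W (\<lambda>x. frechet_derivative g (at x) b))"
      apply (rule smooth_funI) using 1 2 by auto
  qed
qed


lemma vector_4 [simp]:
  "(vector [a,b,c,d] :: 'a::zero^4) $ 1 = a"
  "(vector [a,b,c,d] :: 'a::zero^4) $ 2 = b"
  "(vector [a,b,c,d] :: 'a::zero^4) $ 3 = c"
  "(vector [a,b,c,d] :: 'a::zero^4) $ 4 = d"
  unfolding vector_def by simp_all

definition nsq :: "real^4 \<Rightarrow> real" where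
  "nsq x = x$1^2 + x$2^2 + x$3^2 + x$4^2"

lemma nsq_norm: "nsq x = norm x ^ 2"
  by (simp add: nsq_def norm_vec_def L2_set_def sum_4 power2_eq_square real_sqrt_mult_self)

lemma hmul_nth [simp]:
  "hmul q x $ 1 = q$1*x$1 - q$2*x$2 - q$3*x$3 - q$4*x$4"
  "hmul q x $ 2 = q$1*x$2 + q$2*x$1 + q$3*x$4 - q$4*x$3"
  "hmul q x $ 3 = q$1*x$3 - q$2*x$4 + q$3*x$1 + q$4*x$2"
  "hmul q x $ 4 = q$1*x$4 + q$2*x$3 - q$3*x$2 + q$4*x$1"
  by (simp_all add: hmul_def)

lemma nsq_hmul: "nsq (hmul p x) = nsq p * nsq x"
  by (simp add: nsq_def power2_eq_square algebra_simps)

definition Rm :: "real^4 \<Rightarrow> real^3^3" where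
  "Rm x = vector [
     vector [x$1^2+x$2^2-x$3^2-x$4^2, 2*(x$2*x$3-x$1*x$4), 2*(x$2*x$4+x$1*x$3)],
     vector [2*(x$2*x$3+x$1*x$4), x$1^2-x$2^2+x$3^2-x$4^2, 2*(x$3*x$4-x$1*x$2)],
     vector [2*(x$2*x$4-x$1*x$3), 2*(x$3*x$4+x$1*x$2), x$1^2-x$2^2-x$3^2+x$4^2]]"

lemma Rm_nth [simp]:
  "Rm x $1$1 = x$1^2+x$2^2-x$3^2-x$4^2"
  "Rm x $1$2 = 2*(x$2*x$3-x$1*x$4)"
  "Rm x $1$3 = 2*(x$2*x$4+x$1*x$3)"
  "Rm x $2$1 = 2*(x$2*x$3+x$1*x$4)"
  "Rm x $2$2 = x$1^2-x$2^2+x$3^2-x$4^2"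
  "Rm x $2$3 = 2*(x$3*x$4-x$1*x$2)"
  "Rm x $3$1 = 2*(x$2*x$4-x$1*x$3)"
  "Rm x $3$2 = 2*(x$3*x$4+x$1*x$2)"
  "Rm x $3$3 = x$1^2-x$2^2-x$3^2+x$4^2"
  by (simp_all add: Rm_def)

lemma mat3_eq: "(A::real^3^3) = B \<longleftrightarrow> (\<forall>i j. A$i$j = B$i$j)"
  by (simp add: vec_eq_iff)

lemma mat3_eqI: "(\<And>i j. (A::real^3^3)$i$j = B$i$j) \<Longrightarrow> A = B"
  by (simp add: vec_eq_iff)

lemma mmul3: "((A::real^3^3) ** B) $ i $ j = A$i$1*B$1$j + A$i$2*B$2$j + A$i$3*B$3$j"
  by (simp add: matrix_matrix_mult_def sum_3)

lemma Rm_hmul: "Rm (hmul p x) = Rm p ** Rm x"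
  unfolding mat3_eq forall_3 mmul3 Rm_nth hmul_nth
  by (simp add: power2_eq_square algebra_simps)


lemma tr3 [simp]: "transpose (A::real^3^3) $ i $ j = A $ j $ i"
  by (simp add: transpose_def)

lemma mat1_3 [simp]: "(mat 1 :: real^3^3) $ i $ j = (if i = j then 1 else 0)"
  by (simp add: mat_def)

lemma Rm_orth1: "Rm x ** transpose (Rm x) = (nsq x ^ 2) *\<^sub>R mat 1"
  unfolding mat3_eq forall_3 mmul3 tr3 Rm_nth
  by (simp add: nsq_def power2_eq_square algebra_simps)

lemma Rm_orth2: "transpose (Rm x) ** Rm x = (nsq x ^ 2) *\<^sub>R mat 1"
  unfolding mat3_eq forall_3 mmul3 tr3 Rm_nth
  by (simp add: nsq_def power2_eq_square algebra_simps)

definition cnj :: "real^4 \<Rightarrow> real^4" where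
  "cnj x = vector [x$1, - x$2, - x$3, - x$4]"

lemma cnj_nth [simp]: "cnj x $ 1 = x$1" "cnj x $ 2 = - x$2" "cnj x $ 3 = - x$3" "cnj x $ 4 = - x$4"
  by (simp_all add: cnj_def)

lemma vec4_eq: "(x::real^4) = y \<longleftrightarrow> x$1 = y$1 \<and> x$2 = y$2 \<and> x$3 = y$3 \<and> x$4 = y$4"
  by (simp add: vec_eq_iff forall_4)

lemma Rm_cnj: "Rm (cnj x) = transpose (Rm x)"
  unfolding mat3_eq forall_3 tr3 Rm_nth cnj_nth by (simp add: algebra_simps)

lemma hmul_cnj: "hmul (hmul y (cnj x)) x = nsq x *\<^sub>R y"
  unfolding vec4_eq by (simp add: nsq_def power2_eq_square algebra_simps)

lemma hmul_one: "hmul (vector [1,0,0,0]) x = x"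
  unfolding vec4_eq by simp

lemma hmul_lin1: "hmul (p + t *\<^sub>R w) x = hmul p x + t *\<^sub>R hmul w x"
  unfolding vec4_eq by (simp add: algebra_simps)

lemma hmul_scale1: "hmul (t *\<^sub>R w) x = t *\<^sub>R hmul w x"
  unfolding vec4_eq by (simp add: algebra_simps)

lemma hmul_linear2: "linear (hmul q)"
  apply (rule linearI)
  unfolding vec4_eq by (simp_all add: algebra_simps)

lemma hmul_inner: "hmul q a \<bullet> hmul q b = nsq q * (a \<bullet> b)"
  by (simp add: inner_vec_def sum_4 nsq_def power2_eq_square algebra_simps)

lemma nsq_Q8: "q \<in> Q8 \<Longrightarrow> nsq q = 1"
  by (auto simp: Q8_def nsq_def)

lemma Rm_Q8_diag: "q \<in> Q8 \<Longrightarrow> \<exists>a b c. Rm q = vector [vector [a,0,0], vector[0,b,0], vector[0,0,c]] \<and> a^2 = 1 \<and> b^2 = 1 \<and> c^2 = 1"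
  unfolding Q8_def mat3_eq forall_3
  by (auto simp: Rm_nth)


definition l1 :: "real \<Rightarrow> real" where "l1 s = ((s^2 - 1) + 2 * s / sqrt 3) / (s^2 + 1)"
definition l2 :: "real \<Rightarrow> real" where "l2 s = - 4 * s / (sqrt 3 * (s^2 + 1))"
definition l3 :: "real \<Rightarrow> real" where "l3 s = (- (s^2 - 1) + 2 * s / sqrt 3) / (s^2 + 1)"

definition Dm :: "real \<Rightarrow> real^3^3" where
  "Dm s = vector [vector [l1 s, 0, 0], vector [0, l2 s, 0], vector [0, 0, l3 s]]"

lemma Dm_nth [simp]:
  "Dm s $1$1 = l1 s" "Dm s $1$2 = 0" "Dm s $1$3 = 0"
  "Dm s $2$1 = 0" "Dm s $2$2 = l2 s" "Dm s $2$3 = 0"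
  "Dm s $3$1 = 0" "Dm s $3$2 = 0" "Dm s $3$3 = l3 s"
  by (simp_all add: Dm_def)

definition Ep :: "real \<Rightarrow> real^4 \<Rightarrow> real^3^3" where
  "Ep s p = (1 / nsq p ^ 2) *\<^sub>R (transpose (Rm p) ** Dm (nsq p * s) ** Rm p)"

definition Psi :: "real^4 \<Rightarrow> real^3^3" where
  "Psi x = Ep 1 x"

lemma Psi_hmul: "Psi (hmul p x) = (1 / nsq x ^ 2) *\<^sub>R (transpose (Rm x) ** Ep (nsq x) p ** Rm x)"
  unfolding Psi_def Ep_def Rm_hmul nsq_hmul matrix_transpose_mul
  by (simp add: matrix_mul_assoc matrix_scalar_ac scalar_matrix_assoc[symmetric] power_mult_distrib mult.commute)

lemma Dm_Q8: "q \<in> Q8 \<Longrightarrow> transpose (Rm q) ** Dm s ** Rm q = Dm s"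
  unfolding Q8_def mat3_eq forall_3 mmul3 tr3
  by (auto simp: Rm_nth)

lemma Ep_Q8: "q \<in> Q8 \<Longrightarrow> Ep s q = Dm s"
  by (simp add: Ep_def nsq_Q8 Dm_Q8)

lemma Psi_Q8: "q \<in> Q8 \<Longrightarrow> Psi (hmul q x) = Psi x"
  unfolding Psi_hmul Ep_Q8
  by (simp add: Psi_def Ep_def)



lemma sqrt3_bounds: "1 < sqrt (3::real)" "sqrt (3::real) < 2"
proof -
  have "sqrt (1::real) < sqrt 3" by (rule real_sqrt_less_mono) simp
  then show "1 < sqrt (3::real)" by simp
  have "sqrt (3::real) < sqrt 4" by (rule real_sqrt_less_mono) simp
  also have "sqrt (4::real) = 2" by (simp add: real_sqrt_eq_iff) 
  finally show "sqrt (3::real) < 2" .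
qed

lemma sq100: "s \<ge> 100 \<Longrightarrow> s^2 \<ge> 100 * (s::real)"
  unfolding power2_eq_square by (rule mult_right_mono) auto

lemma l1_gt: "s \<ge> 100 \<Longrightarrow> l1 s > 1/2"
proof -
  assume s: "s \<ge> 100"
  have "2 * s / sqrt 3 > 0" using s by simp
  moreover have "s^2 - 1 \<ge> (s^2 + 1) / 2" using s sq100[OF s] by (simp add: field_simps)
  ultimately have "(s^2 - 1) + 2 * s / sqrt 3 > (s^2 + 1) / 2" by linarith
  then show ?thesis unfolding l1_def using s by (simp add: field_simps add_pos_pos)
qed

lemma l2_bounds: "s \<ge> 100 \<Longrightarrow> l2 s > -1/2 \<and> l2 s < 0"
proof -
  assume s: "s \<ge> 100"
  have r: "1 < sqrt (3::real)" by (rule sqrt3_bounds)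
  have p: "s^2 + 1 > 0" by (smt (verit) zero_le_power2)
  have "8 * s < 1 * (s^2 + 1)" using s sq100[OF s] by (simp add: field_simps)
  also have "\<dots> < sqrt 3 * (s^2 + 1)" using r p by (simp add: mult_strict_right_mono)
  finally have a: "8 * s < sqrt 3 * (s^2 + 1)" .
  define D where "D = sqrt 3 * (s^2 + 1)"
  have D: "D > 0" using p by (simp add: D_def)
  have e: "l2 s = - ((4 * s) / D)" unfolding l2_def D_def by simp
  have "(4 * s) / D < 1/2" using a D by (simp add: divide_less_eq D_def)
  moreover have "(4 * s) / D > 0" using D s by simp
  ultimately show ?thesis unfolding e by linarith
qed

lemma l3_lt: "s \<ge> 100 \<Longrightarrow> l3 s < -1/2"
proof -
  assume s: "s \<ge> 100"
  have r: "1 < sqrt (3::real)" by (rule sqrt3_bounds)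
  have "2 * s / sqrt 3 < 2 * s" using r s by (simp add: field_simps)
  moreover have "s^2 - 1 - 2 * s > (s^2 + 1) / 2" using s sq100[OF s] by (simp add: field_simps)
  ultimately have "- (s^2 - 1) + 2 * s / sqrt 3 < - (s^2 + 1) / 2" by linarith
  then show ?thesis unfolding l3_def by (simp add: field_simps add_pos_nonneg)
qed

lemma l2_inj: "s \<ge> 100 \<Longrightarrow> t \<ge> 100 \<Longrightarrow> l2 s = l2 t \<Longrightarrow> s = t"
proof -
  assume s: "s \<ge> 100" and t: "t \<ge> 100" and e: "l2 s = l2 t"
  have r: "sqrt (3::real) > 0" by simp
  have ps: "s^2 + 1 > 0" and pt: "t^2 + 1 > 0" by (smt (verit) zero_le_power2)+
  have st: "s * t \<ge> 100 * t" using s t by (intro mult_right_mono) auto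
  from e have "(4 * s) / (sqrt 3 * (s^2 + 1)) = (4 * t) / (sqrt 3 * (t^2 + 1))" unfolding l2_def by simp
  then have "(4 * s) * (sqrt 3 * (t^2 + 1)) = (4 * t) * (sqrt 3 * (s^2 + 1))"
    using r ps pt by (simp add: frac_eq_eq)
  then have "(4 * sqrt 3) * (s * (t^2 + 1)) = (4 * sqrt 3) * (t * (s^2 + 1))" by (simp add: algebra_simps)
  then have "s * (t^2 + 1) = t * (s^2 + 1)" using r by simp
  then have "(s - t) * (1 - s * t) = 0" by (simp add: algebra_simps power2_eq_square)
  moreover have "1 - s * t \<noteq> 0" using t st by linarith
  ultimately show "s = t" by simp
qed

lemma l_sep:
  assumes "s \<ge> 100" "t \<ge> 100"
  shows "l1 s \<noteq> l2 t" "l1 s \<noteq> l3 t" "l2 s \<noteq> l1 t" "l2 s \<noteq> l3 t" "l3 s \<noteq> l1 t" "l3 s \<noteq> l2 t"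
  using l1_gt[OF assms(1)] l1_gt[OF assms(2)] l2_bounds[OF assms(1)] l2_bounds[OF assms(2)]
    l3_lt[OF assms(1)] l3_lt[OF assms(2)] by linarith+


lemma q8_char:
  assumes "q$1*q$2 = 0" "q$1*q$3 = 0" "q$1*q$4 = 0" "q$2*q$3 = 0" "q$2*q$4 = 0" "q$3*q$4 = 0" "nsq q = 1"
  shows "q \<in> Q8"
proof -
  have pm: "a^2 = 1 \<Longrightarrow> a = 1 \<or> a = -1" for a :: real
    by (metis power2_eq_1_iff)
  consider "q$1 \<noteq> 0" | "q$2 \<noteq> 0" | "q$3 \<noteq> 0" | "q$4 \<noteq> 0" | "q$1 = 0 \<and> q$2 = 0 \<and> q$3 = 0 \<and> q$4 = 0" by blast
  then show ?thesis
  proof cases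
    case 1
    then have z: "q$2 = 0" "q$3 = 0" "q$4 = 0" using assms by auto
    then have "q$1^2 = 1" using assms(7) by (simp add: nsq_def)
    then have "q$1 = 1 \<or> q$1 = -1" by (rule pm)
    then show ?thesis using z unfolding Q8_def by (auto simp: vec4_eq)
  next
    case 2
    then have z: "q$1 = 0" "q$3 = 0" "q$4 = 0" using assms by auto
    then have "q$2^2 = 1" using assms(7) by (simp add: nsq_def)
    then have "q$2 = 1 \<or> q$2 = -1" by (rule pm)
    then show ?thesis using z unfolding Q8_def by (auto simp: vec4_eq)
  next
    case 3
    then have z: "q$1 = 0" "q$2 = 0" "q$4 = 0" using assms by auto
    then have "q$3^2 = 1" using assms(7) by (simp add: nsq_def)
    then have "q$3 = 1 \<or> q$3 = -1" by (rule pm)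
    then show ?thesis using z unfolding Q8_def by (auto simp: vec4_eq)
  next
    case 4
    then have z: "q$1 = 0" "q$2 = 0" "q$3 = 0" using assms by auto
    then have "q$4^2 = 1" using assms(7) by (simp add: nsq_def)
    then have "q$4 = 1 \<or> q$4 = -1" by (rule pm)
    then show ?thesis using z unfolding Q8_def by (auto simp: vec4_eq)
  next
    case 5
    then show ?thesis using assms(7) by (simp add: nsq_def)
  qed
qed

lemma Psi_expand: "Psi x = (1 / nsq x ^ 2) *\<^sub>R (transpose (Rm x) ** Dm (nsq x) ** Rm x)"
  by (simp add: Psi_def Ep_def)

lemma Rm_orth1': "A ** Rm x ** transpose (Rm x) = (nsq x ^ 2) *\<^sub>R A"
  by (simp add: matrix_mul_assoc[symmetric] Rm_orth1 matrix_scalar_ac)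

lemma Rm_orth2': "A ** transpose (Rm x) ** Rm x = (nsq x ^ 2) *\<^sub>R A"
  by (simp add: matrix_mul_assoc[symmetric] Rm_orth2 matrix_scalar_ac)

lemma nsq_cnj: "nsq (cnj x) = nsq x"
  by (simp add: nsq_def)

lemma nsq_scale: "nsq (c *\<^sub>R x) = c^2 * nsq x"
  by (simp add: nsq_def power2_eq_square algebra_simps)

lemma nsq_pos: "nsq x \<ge> 100 \<Longrightarrow> nsq x > 0" by simp

lemma fiber_conv:
  assumes x: "nsq x \<ge> 100" and y: "nsq y \<ge> 100" and e: "Psi x = Psi y"
  shows "\<exists>q\<in>Q8. y = hmul q x"
proof -
  define sx where "sx = nsq x"
  define sy where "sy = nsq y"
  have sx0: "sx > 0" and sy0: "sy > 0" using x y by (simp_all add: sx_def sy_def)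
  define M where "M = Rm y ** transpose (Rm x)"
  have 1: "Rm y ** Psi x ** transpose (Rm x) = M ** Dm sx"
    unfolding Psi_expand M_def sx_def
    using sx0 by (simp add: matrix_mul_assoc matrix_scalar_ac scalar_matrix_assoc[symmetric] Rm_orth1' sx_def)
  have 2: "Rm y ** Psi y ** transpose (Rm x) = Dm sy ** M"
    unfolding Psi_expand M_def sy_def
    using sy0 by (simp add: matrix_mul_assoc matrix_scalar_ac scalar_matrix_assoc[symmetric] Rm_orth1 sy_def)
  have MD: "M ** Dm sx = Dm sy ** M" using 1 2 e by simp
  have MM: "M ** transpose M = (sx^2 * sy^2) *\<^sub>R mat 1"
    unfolding M_def matrix_transpose_mul
    by (simp add: matrix_mul_assoc Rm_orth2' matrix_scalar_ac scalar_matrix_assoc[symmetric] Rm_orth1 sx_def sy_def)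
  have sx1: "sx \<ge> 100" and sy1: "sy \<ge> 100" using x y by (simp_all add: sx_def sy_def)
  note sep = l_sep[OF sx1 sy1] l_sep[OF sy1 sx1]
  have off: "M$1$2 = 0" "M$1$3 = 0" "M$2$1 = 0" "M$2$3 = 0" "M$3$1 = 0" "M$3$2 = 0"
  proof -
    have "(M ** Dm sx)$i$j = (Dm sy ** M)$i$j" for i j using MD by simp
    note h = this[unfolded mmul3 Dm_nth]
    show "M$1$2 = 0" using h[of 1 2] sep by simp
    show "M$1$3 = 0" using h[of 1 3] sep by simp
    show "M$2$1 = 0" using h[of 2 1] sep by simp
    show "M$2$3 = 0" using h[of 2 3] sep by simp
    show "M$3$1 = 0" using h[of 3 1] sep by simp
    show "M$3$2 = 0" using h[of 3 2] sep by simp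
  qed
  have "(M ** transpose M)$2$2 = sx^2 * sy^2" using MM by simp
  then have "M$2$2^2 = sx^2 * sy^2" unfolding mmul3 tr3 using off by (simp add: power2_eq_square)
  then have M22: "M$2$2 \<noteq> 0" using sx0 sy0 by auto
  have "(M ** Dm sx)$2$2 = (Dm sy ** M)$2$2" using MD by simp
  then have "M$2$2 * l2 sx = l2 sy * M$2$2" unfolding mmul3 Dm_nth using off by simp
  then have "l2 sx = l2 sy" using M22 by simp
  then have sxy: "sx = sy" using l2_inj[OF sx1 sy1] by simp
  define p where "p = hmul y (cnj x)"
  have Rp: "Rm p = M" unfolding p_def M_def Rm_hmul Rm_cnj ..
  have pp: "p$2*p$3 = 0" "p$1*p$4 = 0" "p$2*p$4 = 0" "p$1*p$3 = 0" "p$3*p$4 = 0" "p$1*p$2 = 0"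
  proof -
    have a: "Rm p $1$2 = 0" "Rm p $2$1 = 0" "Rm p $1$3 = 0" "Rm p $3$1 = 0" "Rm p $2$3 = 0" "Rm p $3$2 = 0"
      using off Rp by simp_all
    note b = a[unfolded Rm_nth]
    show "p$2*p$3 = 0" using b by (smt (verit))
    show "p$1*p$4 = 0" using b by (smt (verit))
    show "p$2*p$4 = 0" using b by (smt (verit))
    show "p$1*p$3 = 0" using b by (smt (verit))
    show "p$3*p$4 = 0" using b by (smt (verit))
    show "p$1*p$2 = 0" using b by (smt (verit))
  qed
  have np: "nsq p = sx^2" unfolding p_def nsq_hmul nsq_cnj using sxy by (simp add: sx_def sy_def power2_eq_square)
  define q where "q = (1 / sx) *\<^sub>R p"
  have "q \<in> Q8"
  proof (rule q8_char)
    show "q$1*q$2 = 0" "q$1*q$3 = 0" "q$1*q$4 = 0" "q$2*q$3 = 0" "q$2*q$4 = 0" "q$3*q$4 = 0"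
      unfolding q_def using pp by (simp_all add: algebra_simps)
    show "nsq q = 1" unfolding q_def nsq_scale np using sx0 by (simp add: power2_eq_square)
  qed
  moreover have "y = hmul q x"
    unfolding q_def hmul_scale1 p_def hmul_cnj using sx0 by (simp add: sx_def)
  ultimately show ?thesis by blast
qed



lemma Psi_entry: "Psi x $ i $ j = (Rm x$1$i * l1 (nsq x) * Rm x$1$j + Rm x$2$i * l2 (nsq x) * Rm x$2$j + Rm x$3$i * l3 (nsq x) * Rm x$3$j) / nsq x ^ 2"
  unfolding Psi_expand vector_scaleR_component mmul3 tr3 Dm_nth
  by (simp add: divide_inverse algebra_simps)
lemma Psi_sym: "Psi x $ i $ j = Psi x $ j $ i"
  unfolding Psi_entry by (simp add: algebra_simps)

lemma row_norm: "Rm x$k$1^2 + Rm x$k$2^2 + Rm x$k$3^2 = nsq x ^ 2"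
proof -
  have "(Rm x ** transpose (Rm x))$k$k = nsq x ^ 2" unfolding Rm_orth1 by simp
  then show ?thesis unfolding mmul3 tr3 by (simp add: power2_eq_square)
qed

lemma col_norm: "Rm x$1$k^2 + Rm x$2$k^2 + Rm x$3$k^2 = nsq x ^ 2"
proof -
  have "(transpose (Rm x) ** Rm x)$k$k = nsq x ^ 2" unfolding Rm_orth2 by simp
  then show ?thesis unfolding mmul3 tr3 by (simp add: power2_eq_square)
qed

lemma l_alt: "l1 s = ((s^2 - 1) + 2 * s / sqrt 3) / (s^2 + 1)" "l2 s = - 2 * (2 * s / sqrt 3) / (s^2 + 1)"
   "l3 s = (- (s^2 - 1) + 2 * s / sqrt 3) / (s^2 + 1)"
  unfolding l1_def l2_def l3_def by (simp_all add: field_simps)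

lemma l_sum: "l1 s + l2 s + l3 s = 0"
proof -
  have "l1 s + l2 s + l3 s = (((s^2 - 1) + 2 * s / sqrt 3) + (- 2 * (2 * s / sqrt 3)) + (- (s^2 - 1) + 2 * s / sqrt 3)) / (s^2 + 1)"
    unfolding l_alt add_divide_distrib ..
  also have "\<dots> = 0" by simp
  finally show ?thesis .
qed

lemma l_sq: "l1 s ^ 2 + l2 s ^ 2 + l3 s ^ 2 = 2"
proof -
  define b where "b = 2 * s / sqrt 3"
  define D where "D = s^2 + 1"
  have p: "D \<noteq> 0" unfolding D_def by (smt (verit) zero_le_power2)
  have b2: "b^2 = 4 * s^2 / 3" unfolding b_def by (simp add: power_divide power_mult_distrib)
  have "l1 s ^ 2 + l2 s ^ 2 + l3 s ^ 2 = (2 * (s^2 - 1)^2 + 6 * b^2) / D^2"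
    unfolding l_alt b_def[symmetric] D_def[symmetric]
    by (simp add: power_divide add_divide_distrib[symmetric] power2_eq_square algebra_simps)
  also have "\<dots> = 2 * D^2 / D^2" unfolding b2 D_def by (simp add: power2_eq_square algebra_simps)
  also have "\<dots> = 2" using p by simp
  finally show ?thesis .
qed

lemma trace_aux: "(r11*a*r11 + r21*b*r21 + r31*c*r31)/q + (r12*a*r12 + r22*b*r22 + r32*c*r32)/q + (r13*a*r13 + r23*b*r23 + r33*c*r33)/(q::real)
   = (a*(r11^2+r12^2+r13^2) + b*(r21^2+r22^2+r23^2) + c*(r31^2+r32^2+r33^2))/q"
  by (simp add: add_divide_distrib[symmetric] power2_eq_square algebra_simps)

lemma Psi_trace: "nsq x \<noteq> 0 \<Longrightarrow> Psi x $1$1 + Psi x $2$2 + Psi x $3$3 = 0"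
proof -
  assume n: "nsq x \<noteq> 0"
  show ?thesis unfolding Psi_entry[of x] trace_aux row_norm
    by (simp add: distrib_right[symmetric] l_sum)
qed

lemma frob_trace: "(\<Sum>i\<in>UNIV. \<Sum>j\<in>UNIV. (A::real^3^3)$i$j ^ 2) = trace (A ** transpose A)"
  by (simp add: trace_def mmul3 sum_3 power2_eq_square)

lemma Dm_sym: "transpose (Dm s) = Dm s"
  unfolding mat3_eq forall_3 by simp

lemma Psi_frob: "nsq x \<noteq> 0 \<Longrightarrow> (\<Sum>i\<in>UNIV. \<Sum>j\<in>UNIV. Psi x $i$j ^ 2) = 2"
proof -
  assume n: "nsq x \<noteq> 0"
  let ?s = "nsq x" let ?R = "Rm x" let ?D = "Dm ?s"
  have "Psi x ** transpose (Psi x) = (1 / ?s^2)^2 *\<^sub>R (transpose ?R ** ?D ** (?R ** transpose ?R) ** ?D ** ?R)"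
    unfolding Psi_expand matrix_transpose_mul
    by (simp add: matrix_mul_assoc matrix_scalar_ac scalar_matrix_assoc[symmetric] power2_eq_square transpose_scalar matrix_transpose_mul Dm_sym)
  also have "\<dots> = (1 / ?s^2)^2 *\<^sub>R (?s ^ 2 *\<^sub>R (transpose ?R ** (?D ** ?D) ** ?R))"
    unfolding Rm_orth1 by (simp add: matrix_mul_assoc matrix_scalar_ac scalar_matrix_assoc[symmetric])
  finally have e: "Psi x ** transpose (Psi x) = (1 / ?s^2) *\<^sub>R (transpose ?R ** (?D ** ?D) ** ?R)"
    using n by (simp add: power2_eq_square)
  have "trace (Psi x ** transpose (Psi x)) = (1 / ?s^2) * trace (transpose ?R ** (?D ** ?D) ** ?R)"
    unfolding e by (simp add: trace_def sum_distrib_left)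
  also have "trace (transpose ?R ** (?D ** ?D) ** ?R) = trace (?R ** transpose ?R ** (?D ** ?D))"
    by (metis trace_mul_sym matrix_mul_assoc)
  also have "\<dots> = ?s^2 * trace (?D ** ?D)" unfolding Rm_orth1
    by (simp add: trace_def matrix_scalar_ac scalar_matrix_assoc[symmetric] sum_distrib_left)
  also have "trace (?D ** ?D) = 2" using l_sq[of ?s] by (simp add: trace_def sum_3 mmul3 power2_eq_square)
  finally show ?thesis unfolding frob_trace using n by simp
qed

lemma l1_lt: "s \<ge> 100 \<Longrightarrow> l1 s < 2 / sqrt 3"
proof -
  assume s: "s \<ge> 100"
  have r: "1 < sqrt (3::real)" "sqrt (3::real) < 2" by (rule sqrt3_bounds)+
  have r2: "sqrt 3 * sqrt 3 = (3::real)" by simp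
  have p: "s^2 + 1 > 0" by (smt (verit) zero_le_power2)
  have key: "(2 - sqrt 3) * (s - 2 - sqrt 3)^2 = 2 * (s^2 + 1) - (sqrt 3 * (s^2 - 1) + 2 * s)"
  proof -
    define r where "r = sqrt (3::real)"
    have rr: "r * r = 3" unfolding r_def by simp
    have "(2 - r) * (s - 2 - r)^2 = (2 - r) * s^2 - 2 * (4 - r * r) * s + (4 - r * r) * (2 + r)"
      by (simp add: power2_eq_square algebra_simps)
    also have "\<dots> = 2 * (s^2 + 1) - (r * (s^2 - 1) + 2 * s)" unfolding rr by (simp add: algebra_simps)
    finally show ?thesis unfolding r_def .
  qed
  have "s - 2 - sqrt 3 \<noteq> 0" using r s by linarith
  then have "(s - 2 - sqrt 3)^2 > 0" by simp
  then have "(2 - sqrt 3) * (s - 2 - sqrt 3)^2 > 0" using r by simp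
  then have a: "sqrt 3 * (s^2 - 1) + 2 * s < 2 * (s^2 + 1)" using key by linarith
  have n: "(s^2 - 1) + 2 * s / sqrt 3 = (sqrt 3 * (s^2 - 1) + 2 * s) / sqrt 3"
    using r by (simp add: add_divide_distrib)
  have "l1 s = (sqrt 3 * (s^2 - 1) + 2 * s) / (sqrt 3 * (s^2 + 1))"
    unfolding l1_def n by (simp add: divide_divide_eq_left mult.commute)
  also have "\<dots> < 2 * (s^2 + 1) / (sqrt 3 * (s^2 + 1))"
    using a p r by (intro divide_strict_right_mono) auto
  also have "\<dots> = (2 / sqrt 3) * ((s^2 + 1) / (s^2 + 1))" by (simp only: times_divide_times_eq)
  also have "\<dots> = 2 / sqrt 3" using p by simp
  finally show ?thesis .
qed

lemma Psi33_lt: "nsq x \<ge> 100 \<Longrightarrow> Psi x $3$3 < 2 / sqrt 3"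
proof -
  assume x: "nsq x \<ge> 100"
  let ?s = "nsq x"
  have n: "?s > 0" using x by simp
  have "Psi x $3$3 = (Rm x$1$3^2 * l1 ?s + Rm x$2$3^2 * l2 ?s + Rm x$3$3^2 * l3 ?s) / ?s^2"
    unfolding Psi_entry[of x 3 3] by (simp del: Rm_nth add: power2_eq_square algebra_simps)
  also have "\<dots> \<le> (Rm x$1$3^2 * l1 ?s + Rm x$2$3^2 * l1 ?s + Rm x$3$3^2 * l1 ?s) / ?s^2"
  proof -
    have "l2 ?s \<le> l1 ?s" "l3 ?s \<le> l1 ?s" using l1_gt[OF x] l2_bounds[OF x] l3_lt[OF x] by auto
    then have "Rm x$2$3^2 * l2 ?s \<le> Rm x$2$3^2 * l1 ?s" "Rm x$3$3^2 * l3 ?s \<le> Rm x$3$3^2 * l1 ?s"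
      by (simp_all del: Rm_nth add: mult_left_mono)
    then show ?thesis using n by (intro divide_right_mono) auto
  qed
  also have "(Rm x$1$3^2 * l1 ?s + Rm x$2$3^2 * l1 ?s + Rm x$3$3^2 * l1 ?s) = l1 ?s * (Rm x$1$3^2 + Rm x$2$3^2 + Rm x$3$3^2)"
    by (simp del: Rm_nth add: algebra_simps)
  also have "\<dots> = l1 ?s * ?s^2" unfolding col_norm ..
  also have "l1 ?s * ?s^2 / ?s^2 = l1 ?s" using n by simp
  also have "\<dots> < 2 / sqrt 3" by (rule l1_lt[OF x])
  finally show ?thesis .
qed


definition sig :: "real^3^3 \<Rightarrow> real^4" where
  "sig A = (1 / (1 - sqrt 3 / 2 * A$3$3)) *\<^sub>R vector [(A$1$1 - A$2$2)/2, A$1$2, A$1$3, A$2$3]"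

definition Phi :: "real^4 \<Rightarrow> real^4" where
  "Phi x = sig (Psi x)"

definition goodm :: "real^3^3 \<Rightarrow> bool" where
  "goodm A \<longleftrightarrow> A$1$2 = A$2$1 \<and> A$1$3 = A$3$1 \<and> A$2$3 = A$3$2 \<and> A$1$1 + A$2$2 + A$3$3 = 0
     \<and> (\<Sum>i\<in>UNIV. \<Sum>j\<in>UNIV. A$i$j ^ 2) = 2 \<and> A$3$3 < 2 / sqrt 3"

lemma Psi_good: "nsq x \<ge> 100 \<Longrightarrow> goodm (Psi x)"
  unfolding goodm_def using Psi_sym[of x] Psi_trace[of x] Psi_frob[of x] Psi33_lt[of x] by auto

lemma sig_sphere:
  assumes "goodm A"
  shows "((A$1$1 - A$2$2)/2)^2 + A$1$2^2 + A$1$3^2 + A$2$3^2 + (sqrt 3 / 2 * A$3$3)^2 = 1"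
proof -
  have s: "A$1$2 = A$2$1" "A$1$3 = A$3$1" "A$2$3 = A$3$2" and t: "A$3$3 = - A$1$1 - A$2$2"
    and f: "A$1$1^2 + A$1$2^2 + A$1$3^2 + A$2$1^2 + A$2$2^2 + A$2$3^2 + A$3$1^2 + A$3$2^2 + A$3$3^2 = 2"
    using assms unfolding goodm_def by (auto simp: sum_3 algebra_simps)
  have r: "(sqrt 3 / 2)^2 = (3/4::real)" by (simp add: power_divide)
  have id: "((a - b)/2)^2 + c^2 + d^2 + e^2 + 3/4 * (- a - b)^2 = (a^2 + c^2 + d^2 + c^2 + b^2 + e^2 + d^2 + e^2 + (- a - b)^2) / 2" for a b c d e :: real
    by (simp add: field_simps power2_eq_square)
  show ?thesis using f unfolding power_mult_distrib r s[symmetric] t id by simp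
qed

lemma sig_nsq:
  assumes "goodm A"
  shows "nsq (sig A) = (1 + sqrt 3 / 2 * A$3$3) / (1 - sqrt 3 / 2 * A$3$3)"
proof -
  define l where "l = sqrt 3 / 2 * A$3$3"
  have l1: "l < 1" using assms unfolding goodm_def l_def by (simp add: field_simps)
  have sp: "((A$1$1 - A$2$2)/2)^2 + A$1$2^2 + A$1$3^2 + A$2$3^2 = 1 - l^2"
    using sig_sphere[OF assms] unfolding l_def by linarith
  have "nsq (sig A) = (1 / (1 - l))^2 * (((A$1$1 - A$2$2)/2)^2 + A$1$2^2 + A$1$3^2 + A$2$3^2)"
    unfolding sig_def l_def[symmetric] nsq_scale by (simp add: nsq_def)
  also have "\<dots> = (1 - l^2) / (1 - l)^2" unfolding sp by (simp add: power_divide)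
  also have "\<dots> = ((1 + l) * (1 - l)) / ((1 - l) * (1 - l))" by (simp add: power2_eq_square algebra_simps)
  also have "\<dots> = (1 + l) / (1 - l)" using l1 by (subst mult_divide_mult_cancel_right) auto
  finally show ?thesis unfolding l_def .
qed

lemma sig_inj:
  assumes A: "goodm A" and B: "goodm B" and e: "sig A = sig B"
  shows "A = B"
proof -
  define a where "a = sqrt 3 / 2 * A$3$3"
  define b where "b = sqrt 3 / 2 * B$3$3"
  have a1: "a < 1" using A unfolding goodm_def a_def by (simp add: field_simps)
  have b1: "b < 1" using B unfolding goodm_def b_def by (simp add: field_simps)
  have "(1 + a) / (1 - a) = (1 + b) / (1 - b)" using sig_nsq[OF A] sig_nsq[OF B] e unfolding a_def b_def by simp
  then have "(1 + a) * (1 - b) = (1 + b) * (1 - a)" using a1 b1 by (simp add: frac_eq_eq)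
  then have ab: "a = b" by (simp add: algebra_simps)
  then have 33: "A$3$3 = B$3$3" unfolding a_def b_def by simp
  have "(1 - a) *\<^sub>R sig A = (1 - b) *\<^sub>R sig B" using e ab by simp
  then have "vector [(A$1$1 - A$2$2)/2, A$1$2, A$1$3, A$2$3] = (vector [(B$1$1 - B$2$2)/2, B$1$2, B$1$3, B$2$3] :: real^4)"
    unfolding sig_def a_def[symmetric] b_def[symmetric] using a1 b1 by simp
  then have c: "A$1$1 - A$2$2 = B$1$1 - B$2$2" "A$1$2 = B$1$2" "A$1$3 = B$1$3" "A$2$3 = B$2$3"
    unfolding vec4_eq by simp_all
  have tA: "A$1$1 + A$2$2 + A$3$3 = 0" and tB: "B$1$1 + B$2$2 + B$3$3 = 0"
    using A B unfolding goodm_def by auto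
  have d: "A$1$1 = B$1$1" "A$2$2 = B$2$2" using c(1) tA tB 33 by linarith+
  have sA: "A$2$1 = A$1$2" "A$3$1 = A$1$3" "A$3$2 = A$2$3" and sB: "B$2$1 = B$1$2" "B$3$1 = B$1$3" "B$3$2 = B$2$3"
    using A B unfolding goodm_def by auto
  show ?thesis unfolding mat3_eq forall_3 using c d 33 sA sB by simp
qed

lemma fiber:
  assumes "nsq x \<ge> 100" "nsq y \<ge> 100"
  shows "Phi x = Phi y \<longleftrightarrow> (\<exists>q\<in>Q8. y = hmul q x)"
proof
  assume "Phi x = Phi y"
  then have "Psi x = Psi y" unfolding Phi_def using sig_inj Psi_good assms by blast
  then show "\<exists>q\<in>Q8. y = hmul q x" using fiber_conv assms by blast
next
  assume "\<exists>q\<in>Q8. y = hmul q x"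
  then show "Phi x = Phi y" unfolding Phi_def using Psi_Q8 by auto
qed


lemma smooth_coord: "smooth_fun U (\<lambda>x::real^'n. x $ i)"
  by (rule smooth_linear) (simp add: bounded_linear.linear bounded_linear_vec_nth)

lemmas smooth_intros = smooth_add smooth_mult smooth_diff smooth_minus smooth_const smooth_coord smooth_power

definition Ann :: "(real^4) set" where "Ann = {x. norm x > exp 200}"

lemma open_Ann: "open Ann"
  unfolding Ann_def by (simp add: open_Collect_less continuous_on_norm_id continuous_on_const)

lemma Ann_nsq: "x \<in> Ann \<Longrightarrow> nsq x \<ge> 100"
proof -
  assume "x \<in> Ann"
  then have n: "norm x > exp 200" by (simp add: Ann_def)
  have "exp (200::real) \<ge> 1 + 200" by (rule exp_ge_add_one_self)
  then have "norm x \<ge> 10" using n by linarith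
  then have "norm x ^ 2 \<ge> 10 ^ 2" by (rule power_mono) simp
  then show ?thesis by (simp add: nsq_norm)
qed

lemma smooth_nsq: "smooth_fun U nsq"
proof -
  have "open (UNIV::(real^4) set)" by simp
  have "smooth_fun UNIV (\<lambda>x::real^4. x$1^2 + x$2^2 + x$3^2 + x$4^2)"
    by (intro smooth_intros) auto
  then show ?thesis using smooth_subset[of UNIV _ U] by (simp add: nsq_def[abs_def])
qed

lemma smooth_Rm: "smooth_fun U (\<lambda>x. Rm x $ k $ i)"
proof -
  have "open (UNIV::(real^4) set)" by simp
  have "\<forall>k i. smooth_fun UNIV (\<lambda>x. Rm x $ k $ i)"
    unfolding forall_3 Rm_nth by (intro conjI smooth_intros; simp)
  then show ?thesis using smooth_subset[of UNIV _ U] by blast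
qed

lemma nsq_sq1: "nsq x ^ 2 + 1 \<noteq> 0" by (smt (verit) zero_le_power2)

lemma smooth_lk:
  assumes "open U"
  shows "smooth_fun U (\<lambda>x. l1 (nsq x))" "smooth_fun U (\<lambda>x. l2 (nsq x))" "smooth_fun U (\<lambda>x. l3 (nsq x))"
  unfolding l1_def l2_def l3_def
  by (intro smooth_divide smooth_intros smooth_nsq assms; simp add: nsq_sq1)+

lemma smooth_Psi:
  assumes "open U" "\<And>x. x \<in> U \<Longrightarrow> nsq x \<noteq> 0"
  shows "smooth_fun U (\<lambda>x. Psi x $ i $ j)"
  unfolding Psi_entry
  by (intro smooth_divide smooth_intros smooth_nsq smooth_Rm smooth_lk assms; simp add: assms)

lemma smooth_Phi: "smooth_fun Ann (\<lambda>x. Phi x $ i)"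
proof -
  have d: "1 - sqrt 3 / 2 * Psi x $3$3 \<noteq> 0" if "x \<in> Ann" for x
    using Psi33_lt[OF Ann_nsq[OF that]] by (simp add: field_simps)
  have n: "x \<in> Ann \<Longrightarrow> nsq x \<noteq> 0" for x using Ann_nsq by force
  have p: "smooth_fun Ann (\<lambda>x. Psi x $ i $ j)" for i j by (rule smooth_Psi[OF open_Ann n])
  have si: "smooth_fun Ann (\<lambda>x. 1 / (1 - sqrt 3 / 2 * Psi x $3$3))"
    by (rule smooth_divide[OF open_Ann smooth_const smooth_diff[OF open_Ann smooth_const smooth_mult[OF open_Ann smooth_const p]] d])
  have e: "Phi x $ k = (1 / (1 - sqrt 3 / 2 * Psi x $3$3)) * (vector [(Psi x$1$1 - Psi x$2$2)/2, Psi x$1$2, Psi x$1$3, Psi x$2$3] :: real^4) $ k" for x k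
    unfolding Phi_def sig_def by simp
  have c: "smooth_fun Ann (\<lambda>x. (vector [(Psi x$1$1 - Psi x$2$2)/2, Psi x$1$2, Psi x$1$3, Psi x$2$3] :: real^4) $ k)" for k
  proof -
    have "\<forall>k. smooth_fun Ann (\<lambda>x. (vector [(Psi x$1$1 - Psi x$2$2)/2, Psi x$1$2, Psi x$1$3, Psi x$2$3] :: real^4) $ k)"
      unfolding forall_4 vector_4
      using smooth_divide[OF open_Ann smooth_diff[OF open_Ann p p] smooth_const, of 2] p by simp
    then show ?thesis by blast
  qed
  have "\<forall>i. smooth_fun Ann (\<lambda>x. Phi x $ i)"
    unfolding e using smooth_mult[OF open_Ann si c] by blast
  then show ?thesis by blast
qed


definition Pt :: "real^4 \<Rightarrow> real \<Rightarrow> real^4" where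
  "Pt w t = vector [1 + t * w$1, t * w$2, t * w$3, t * w$4]"

lemma Pt_eq: "Pt w t = vector [1,0,0,0] + t *\<^sub>R w"
  unfolding vec4_eq Pt_def by simp

lemma l_diff: "(l1 has_real_derivative deriv l1 u) (at u)" "(l2 has_real_derivative deriv l2 u) (at u)"
  "(l3 has_real_derivative deriv l3 u) (at u)"
proof -
  have p: "u^2 + 1 \<noteq> 0" for u :: real by (smt (verit) zero_le_power2)
  have "l1 differentiable (at u)" unfolding l1_def[abs_def] using p
    by (intro derivative_intros) auto
  then show "(l1 has_real_derivative deriv l1 u) (at u)" by (simp add: DERIV_deriv_iff_real_differentiable)
  have "l2 differentiable (at u)" unfolding l2_def[abs_def] using p
    by (intro derivative_intros) auto
  then show "(l2 has_real_derivative deriv l2 u) (at u)" by (simp add: DERIV_deriv_iff_real_differentiable)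
  have "l3 differentiable (at u)" unfolding l3_def[abs_def] using p
    by (intro derivative_intros) auto
  then show "(l3 has_real_derivative deriv l3 u) (at u)" by (simp add: DERIV_deriv_iff_real_differentiable)
qed

lemma l_chain [derivative_intros]:
  "(f has_real_derivative f') (at t) \<Longrightarrow> ((\<lambda>t. l1 (f t)) has_real_derivative deriv l1 (f t) * f') (at t)"
  "(f has_real_derivative f') (at t) \<Longrightarrow> ((\<lambda>t. l2 (f t)) has_real_derivative deriv l2 (f t) * f') (at t)"
  "(f has_real_derivative f') (at t) \<Longrightarrow> ((\<lambda>t. l3 (f t)) has_real_derivative deriv l3 (f t) * f') (at t)"
  using DERIV_chain2[OF l_diff(1)] DERIV_chain2[OF l_diff(2)] DERIV_chain2[OF l_diff(3)] by auto

lemma Ep_entry: "Ep s p $ i $ j = (Rm p$1$i * l1 (nsq p * s) * Rm p$1$j + Rm p$2$i * l2 (nsq p * s) * Rm p$2$j + Rm p$3$i * l3 (nsq p * s) * Rm p$3$j) / nsq p ^ 2"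
  unfolding Ep_def vector_scaleR_component mmul3 tr3 Dm_nth
  by (simp add: divide_inverse algebra_simps)

lemma Ep12: "((\<lambda>t. Ep s (Pt w t) $1$2) has_real_derivative (- 2 * w$4 * (l1 s - l2 s))) (at 0)"
  unfolding Ep_entry Rm_nth nsq_def Pt_def vector_4
  by (rule derivative_eq_intros refl | simp add: algebra_simps)+

lemma Ep13: "((\<lambda>t. Ep s (Pt w t) $1$3) has_real_derivative (2 * w$3 * (l1 s - l3 s))) (at 0)"
  unfolding Ep_entry Rm_nth nsq_def Pt_def vector_4
  by (rule derivative_eq_intros refl | simp add: algebra_simps)+

lemma Ep23: "((\<lambda>t. Ep s (Pt w t) $2$3) has_real_derivative (- 2 * w$2 * (l2 s - l3 s))) (at 0)"
  unfolding Ep_entry Rm_nth nsq_def Pt_def vector_4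
  by (rule derivative_eq_intros refl | simp add: algebra_simps)+

lemma Ep22: "((\<lambda>t. Ep s (Pt w t) $2$2) has_real_derivative (deriv l2 s * (2 * w$1 * s) + 0 * (w$2 + w$3 + w$4))) (at 0)"
  unfolding Ep_entry Rm_nth nsq_def Pt_def vector_4
  by (rule derivative_eq_intros refl | simp add: algebra_simps)+


lemma path_deriv:
  fixes f :: "'a::real_normed_vector \<Rightarrow> real"
  assumes "(f has_derivative F') (at x)"
  shows "((\<lambda>t. f (x + t *\<^sub>R v)) has_real_derivative F' v) (at 0)"
proof -
  have l: "linear F'" using assms has_derivative_linear by blast
  have p: "((\<lambda>t::real. x + t *\<^sub>R v) has_derivative (\<lambda>t. t *\<^sub>R v)) (at 0)"
    by (auto intro!: derivative_eq_intros)
  have "((\<lambda>t. f (x + t *\<^sub>R v)) has_derivative (\<lambda>t. F' (t *\<^sub>R v))) (at 0)"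
    using has_derivative_compose[OF p, of f F'] assms by simp
  moreover have "(\<lambda>t. F' (t *\<^sub>R v)) = (\<lambda>t. F' v * t)" using linear_scale[OF l] by (auto simp: mult.commute)
  ultimately show ?thesis by (simp add: has_field_derivative_def)
qed

lemma Phi_comp:
  "Phi z $ 1 = ((Psi z$1$1 - Psi z$2$2)/2) / (1 - sqrt 3 / 2 * Psi z$3$3)"
  "Phi z $ 2 = Psi z$1$2 / (1 - sqrt 3 / 2 * Psi z$3$3)"
  "Phi z $ 3 = Psi z$1$3 / (1 - sqrt 3 / 2 * Psi z$3$3)"
  "Phi z $ 4 = Psi z$2$3 / (1 - sqrt 3 / 2 * Psi z$3$3)"
  unfolding Phi_def sig_def by simp_all

lemma l2_alt: "l2 = (\<lambda>u. (- 4 / sqrt 3) * (u / (u^2 + 1)))"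
  unfolding l2_def by (auto simp: field_simps)

lemma l2_deriv_ne: "s \<ge> 100 \<Longrightarrow> deriv l2 s \<noteq> 0"
proof -
  assume s: "s \<ge> 100"
  have p: "s^2 + 1 \<noteq> 0" by (smt (verit) zero_le_power2)
  have "((\<lambda>u. u / (u^2 + 1)) has_real_derivative (1 * (s^2 + 1) - s * (2 * s)) / ((s^2 + 1) * (s^2 + 1))) (at s)"
    by (rule DERIV_divide) (auto intro!: derivative_eq_intros simp: p)
  then have "(l2 has_real_derivative (- 4 / sqrt 3) * ((1 * (s^2 + 1) - s * (2 * s)) / ((s^2 + 1) * (s^2 + 1)))) (at s)"
    unfolding l2_alt by (rule DERIV_cmult)
  then have e: "deriv l2 s = (- 4 / sqrt 3) * ((1 * (s^2 + 1) - s * (2 * s)) / ((s^2 + 1) * (s^2 + 1)))"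
    by (rule DERIV_imp_deriv)
  have "1 * (s^2 + 1) - s * (2 * s) = 1 - s^2" by (simp add: power2_eq_square)
  moreover have "1 - s^2 \<noteq> 0" using sq100[OF s] s by linarith
  ultimately show ?thesis unfolding e using p by simp
qed


lemma Psi_diff: "x \<in> Ann \<Longrightarrow> ((\<lambda>z. Psi z $ a $ b) has_derivative frechet_derivative (\<lambda>z. Psi z $ a $ b) (at x)) (at x)"
  using smooth_fun_diff[OF smooth_Psi[OF open_Ann]] Ann_nsq by force

lemma DPhi_inj:
  assumes x: "x \<in> Ann"
    and L0: "\<And>i. frechet_derivative (\<lambda>z. Phi z $ i) (at x) v = 0"
  shows "v = 0"
proof -
  define s where "s = nsq x"
  have s100: "s \<ge> 100" using Ann_nsq[OF x] by (simp add: s_def)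
  define T where "T = {t::real. x + t *\<^sub>R v \<in> Ann}"
  have oT: "open T" unfolding T_def Ann_def
    by (auto intro!: open_Collect_less continuous_intros)
  have T0: "0 \<in> T" using x by (simp add: T_def)
  define cp where "cp a b = frechet_derivative (\<lambda>z. Psi z $ a $ b) (at x) v" for a b
  have cpath: "((\<lambda>t. Psi (x + t *\<^sub>R v) $ a $ b) has_real_derivative cp a b) (at 0)" for a b
    unfolding cp_def by (rule path_deriv[OF Psi_diff[OF x]])
  have phid: "((\<lambda>t. Phi (x + t *\<^sub>R v) $ i) has_real_derivative 0) (at 0)" for i
  proof -
    have "((\<lambda>z. Phi z $ i) has_derivative frechet_derivative (\<lambda>z. Phi z $ i) (at x)) (at x)"
      using smooth_fun_diff[OF smooth_Phi x] .
    from path_deriv[OF this, of v] show ?thesis using L0 by simp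
  qed
  define c where "c = Psi x"
  define l where "l = sqrt 3 / 2 * c$3$3"
  define l' where "l' = sqrt 3 / 2 * cp 3 3"
  have good: "goodm c" unfolding c_def by (rule Psi_good[OF Ann_nsq[OF x]])
  have l1: "1 - l \<noteq> 0" using good unfolding goodm_def l_def by (simp add: field_simps)
  have gd: "((\<lambda>t. 1 - sqrt 3 / 2 * Psi (x + t *\<^sub>R v) $3$3) has_real_derivative - l') (at 0)"
    unfolding l'_def by (rule derivative_eq_intros cpath refl | simp)+
  have g0: "1 - sqrt 3 / 2 * Psi (x + 0 *\<^sub>R v) $3$3 \<noteq> 0" using l1 by (simp add: l_def c_def)
  have N: "u' * (1 - l) + u * l' = 0"
    if uh: "((\<lambda>t. U t) has_real_derivative u') (at 0)" and u0: "U 0 = u"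
      and ph: "\<And>t. Phi (x + t *\<^sub>R v) $ i = U t / (1 - sqrt 3 / 2 * Psi (x + t *\<^sub>R v) $3$3)"
    for U u u' i
  proof -
    have "((\<lambda>t. U t / (1 - sqrt 3 / 2 * Psi (x + t *\<^sub>R v) $3$3)) has_real_derivative
        (u' * (1 - sqrt 3 / 2 * Psi (x + 0 *\<^sub>R v) $3$3) - U 0 * (- l')) /
        ((1 - sqrt 3 / 2 * Psi (x + 0 *\<^sub>R v) $3$3) * (1 - sqrt 3 / 2 * Psi (x + 0 *\<^sub>R v) $3$3))) (at 0)"
      by (rule DERIV_divide[OF uh gd g0])
    moreover have "((\<lambda>t. U t / (1 - sqrt 3 / 2 * Psi (x + t *\<^sub>R v) $3$3)) has_real_derivative 0) (at 0)"
      using phid[of i] unfolding ph .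
    ultimately have "(u' * (1 - l) - u * (- l')) / ((1 - l) * (1 - l)) = 0"
      using DERIV_unique u0 by (fastforce simp: l_def c_def)
    then show ?thesis using l1 by simp
  qed
  define u1 where "u1 = (c$1$1 - c$2$2)/2"
  define u1' where "u1' = (cp 1 1 - cp 2 2)/2"
  have N1: "u1' * (1 - l) + u1 * l' = 0"
    by (rule N[where U="\<lambda>t. (Psi (x + t *\<^sub>R v)$1$1 - Psi (x + t *\<^sub>R v)$2$2)/2" and i=1])
       (unfold u1'_def u1_def c_def Phi_comp, (rule derivative_eq_intros cpath refl | simp)+)
  have N2: "cp 1 2 * (1 - l) + c$1$2 * l' = 0"
    by (rule N[where U="\<lambda>t. Psi (x + t *\<^sub>R v)$1$2" and i=2]) (auto simp: c_def Phi_comp cpath)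
  have N3: "cp 1 3 * (1 - l) + c$1$3 * l' = 0"
    by (rule N[where U="\<lambda>t. Psi (x + t *\<^sub>R v)$1$3" and i=3]) (auto simp: c_def Phi_comp cpath)
  have N4: "cp 2 3 * (1 - l) + c$2$3 * l' = 0"
    by (rule N[where U="\<lambda>t. Psi (x + t *\<^sub>R v)$2$3" and i=4]) (auto simp: c_def Phi_comp cpath)
  define H where "H t = ((Psi (x + t *\<^sub>R v)$1$1 - Psi (x + t *\<^sub>R v)$2$2)/2)^2 + Psi (x + t *\<^sub>R v)$1$2^2
     + Psi (x + t *\<^sub>R v)$1$3^2 + Psi (x + t *\<^sub>R v)$2$3^2 + (sqrt 3 / 2 * Psi (x + t *\<^sub>R v)$3$3)^2" for t
  have Hd: "(H has_real_derivative 2 * (u1 * u1' + c$1$2 * cp 1 2 + c$1$3 * cp 1 3 + c$2$3 * cp 2 3 + l * l')) (at 0)"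
    unfolding H_def u1_def u1'_def l_def l'_def c_def
    by (rule derivative_eq_intros cpath refl | simp add: field_simps)+
  have H1: "(H has_real_derivative 0) (at 0)"
  proof (rule has_field_derivative_transform_within_open[OF DERIV_const[of 1] oT T0])
    fix t assume "t \<in> T"
    then have "goodm (Psi (x + t *\<^sub>R v))" using Psi_good Ann_nsq by (simp add: T_def)
    from sig_sphere[OF this] show "1 = H t" unfolding H_def by simp
  qed
  have tan: "u1 * u1' + c$1$2 * cp 1 2 + c$1$3 * cp 1 3 + c$2$3 * cp 2 3 + l * l' = 0"
    using DERIV_unique[OF Hd H1] by simp
  have sph: "u1^2 + c$1$2^2 + c$1$3^2 + c$2$3^2 + l^2 = 1"
    using sig_sphere[OF good] unfolding u1_def l_def .
  have "l' * (1 - l) = u1 * (u1' * (1 - l) + u1 * l') + c$1$2 * (cp 1 2 * (1 - l) + c$1$2 * l')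
      + c$1$3 * (cp 1 3 * (1 - l) + c$1$3 * l') + c$2$3 * (cp 2 3 * (1 - l) + c$2$3 * l')
      - (1 - l) * (u1 * u1' + c$1$2 * cp 1 2 + c$1$3 * cp 1 3 + c$2$3 * cp 2 3 + l * l')
      - l' * (u1^2 + c$1$2^2 + c$1$3^2 + c$2$3^2 + l^2 - 1)"
    by (simp add: power2_eq_square algebra_simps)
  also have "\<dots> = 0" unfolding N1 N2 N3 N4 tan sph by simp
  finally have "l' = 0" using l1 by simp
  then have z: "cp 3 3 = 0" "u1' = 0" "cp 1 2 = 0" "cp 1 3 = 0" "cp 2 3 = 0"
    using N1 N2 N3 N4 l1 by (simp_all add: l'_def)
  have trd: "cp 1 1 + cp 2 2 + cp 3 3 = 0"
  proof -
    have "((\<lambda>t. Psi (x + t *\<^sub>R v)$1$1 + Psi (x + t *\<^sub>R v)$2$2 + Psi (x + t *\<^sub>R v)$3$3) has_real_derivative cp 1 1 + cp 2 2 + cp 3 3) (at 0)"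
      by (rule derivative_eq_intros cpath refl | simp)+
    moreover have "((\<lambda>t. Psi (x + t *\<^sub>R v)$1$1 + Psi (x + t *\<^sub>R v)$2$2 + Psi (x + t *\<^sub>R v)$3$3) has_real_derivative 0) (at 0)"
    proof (rule has_field_derivative_transform_within_open[OF DERIV_const[of 0] oT T0])
      fix t assume "t \<in> T"
      then have "nsq (x + t *\<^sub>R v) \<noteq> 0" using Ann_nsq by (force simp: T_def)
      then show "0 = Psi (x + t *\<^sub>R v)$1$1 + Psi (x + t *\<^sub>R v)$2$2 + Psi (x + t *\<^sub>R v)$3$3"
        using Psi_trace by simp
    qed
    ultimately show ?thesis using DERIV_unique by blast
  qed
  have sym: "cp a b = cp b a" for a b
  proof -
    have "(\<lambda>z. Psi z $ a $ b) = (\<lambda>z. Psi z $ b $ a)" using Psi_sym by auto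
    then show ?thesis unfolding cp_def by simp
  qed
  have cp0: "cp a b = 0" for a b
  proof -
    have e: "cp 1 1 = cp 2 2" using z(2) unfolding u1'_def by simp
    have d1: "cp 1 1 = 0" using trd z(1) unfolding e by simp
    have d2: "cp 2 2 = 0" using d1 e by simp
    note d = d1 d2
    have "\<forall>a b. cp a b = 0" unfolding forall_3 using z d sym[of 2 1] sym[of 3 1] sym[of 3 2] by simp
    then show ?thesis by blast
  qed
  define w where "w = (1 / s) *\<^sub>R hmul v (cnj x)"
  have s0: "s \<noteq> 0" using s100 by simp
  have hw: "hmul (Pt w t) x = x + t *\<^sub>R v" for t
    unfolding Pt_eq hmul_lin1 hmul_one w_def hmul_scale1 hmul_cnj using s0 by (simp add: s_def)
  have s4: "s ^ 4 / s ^ 2 = s ^ 2"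
  proof -
    have "s ^ 4 / s^2 = (s^2 * s^2) / s^2" by (simp flip: power_add)
    also have "\<dots> = s^2" using s0 by (intro nonzero_mult_div_cancel_right) simp
    finally show ?thesis .
  qed
  have Erel: "Ep s (Pt w t) = (1 / s^2) *\<^sub>R (Rm x ** Psi (x + t *\<^sub>R v) ** transpose (Rm x))" for t
  proof -
    have "Psi (x + t *\<^sub>R v) = (1 / s^2) *\<^sub>R (transpose (Rm x) ** Ep s (Pt w t) ** Rm x)"
      using Psi_hmul[of "Pt w t" x] unfolding hw s_def .
    then have "Rm x ** Psi (x + t *\<^sub>R v) ** transpose (Rm x) = (1 / s^2) *\<^sub>R (s^2 *\<^sub>R (s^2 *\<^sub>R Ep s (Pt w t)))"
      by (simp add: matrix_mul_assoc matrix_scalar_ac scalar_matrix_assoc[symmetric] Rm_orth1' s_def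
          Rm_orth1[unfolded s_def[symmetric]] s4 flip: s_def)
    then show ?thesis using s0 by simp
  qed
  have Ed: "((\<lambda>t. Ep s (Pt w t) $ k $ l) has_real_derivative 0) (at 0)" for k l
  proof -
    have e: "Ep s (Pt w t) $ k $ l = (1 / s^2) * (
       (Rm x$k$1 * Psi (x + t *\<^sub>R v)$1$1 + Rm x$k$2 * Psi (x + t *\<^sub>R v)$2$1 + Rm x$k$3 * Psi (x + t *\<^sub>R v)$3$1) * Rm x$l$1
     + (Rm x$k$1 * Psi (x + t *\<^sub>R v)$1$2 + Rm x$k$2 * Psi (x + t *\<^sub>R v)$2$2 + Rm x$k$3 * Psi (x + t *\<^sub>R v)$3$2) * Rm x$l$2
     + (Rm x$k$1 * Psi (x + t *\<^sub>R v)$1$3 + Rm x$k$2 * Psi (x + t *\<^sub>R v)$2$3 + Rm x$k$3 * Psi (x + t *\<^sub>R v)$3$3) * Rm x$l$3)" for t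
      unfolding Erel vector_scaleR_component mmul3 tr3 by simp
    show ?thesis unfolding e
      by (rule derivative_eq_intros cpath refl | simp add: cp0 del: Rm_nth)+
  qed
  have w4: "w$4 = 0" using DERIV_unique[OF Ep12 Ed] l_sep[OF s100 s100] by auto
  have w3: "w$3 = 0" using DERIV_unique[OF Ep13 Ed] l_sep[OF s100 s100] by auto
  have w2: "w$2 = 0" using DERIV_unique[OF Ep23 Ed] l_sep[OF s100 s100] by auto
  have w1: "w$1 = 0" using DERIV_unique[OF Ep22 Ed] l2_deriv_ne[OF s100] s0 by auto
  have "w = 0" using w1 w2 w3 w4 by (simp add: vec4_eq)
  then have "hmul w x = 0" by (simp add: vec4_eq)
  moreover have "hmul w x = v" unfolding w_def hmul_scale1 hmul_cnj using s0 by (simp add: s_def)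
  ultimately show ?thesis by simp
qed


lemma has_derivative_vec4:
  fixes f :: "'a::real_normed_vector \<Rightarrow> real^'n"
  assumes "\<And>i. ((\<lambda>z. f z $ i) has_derivative (\<lambda>v. f' v $ i)) (at x)"
  shows "(f has_derivative f') (at x)"
  apply (subst has_derivative_componentwise_within)
  using assms by (auto simp: Basis_vec_def inner_axis)

definition J :: "real^4 \<Rightarrow> real^4^4" where
  "J x = (\<chi> i j. frechet_derivative (\<lambda>z. Phi z $ i) (at x) (axis j 1))"

lemma J_apply: "x \<in> Ann \<Longrightarrow> (J x *v v) $ i = frechet_derivative (\<lambda>z. Phi z $ i) (at x) v"
proof -
  assume x: "x \<in> Ann"
  have l: "linear (frechet_derivative (\<lambda>z. Phi z $ i) (at x))"
    using smooth_fun_diff[OF smooth_Phi x] has_derivative_linear by blast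
  have "frechet_derivative (\<lambda>z. Phi z $ i) (at x) v = frechet_derivative (\<lambda>z. Phi z $ i) (at x) (\<Sum>j\<in>UNIV. v $ j *\<^sub>R axis j 1)"
    using basis_expansion[of v] by (simp add: scalar_mult_eq_scaleR)
  also have "\<dots> = (\<Sum>j\<in>UNIV. v $ j * frechet_derivative (\<lambda>z. Phi z $ i) (at x) (axis j 1))"
    by (simp add: linear_sum[OF l] linear_scale[OF l])
  also have "\<dots> = (J x *v v) $ i"
    by (simp add: J_def matrix_vector_mult_def mult.commute)
  finally show ?thesis ..
qed

lemma Phi_hasderiv: "x \<in> Ann \<Longrightarrow> (Phi has_derivative (\<lambda>v. J x *v v)) (at x)"
  by (rule has_derivative_vec4) (simp add: J_apply smooth_fun_diff[OF smooth_Phi])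

lemma DPhi_eq: "x \<in> Ann \<Longrightarrow> frechet_derivative Phi (at x) = (\<lambda>v. J x *v v)"
  using Phi_hasderiv frechet_derivative_at by metis

lemma J_inj: "x \<in> Ann \<Longrightarrow> J x *v v = 0 \<Longrightarrow> v = 0"
  by (rule DPhi_inj) (auto simp: vec_eq_iff J_apply[symmetric])

lemma det_J: "x \<in> Ann \<Longrightarrow> det (J x) \<noteq> 0"
proof -
  assume x: "x \<in> Ann"
  have "\<exists>B. B ** J x = mat 1" unfolding matrix_left_invertible_ker using J_inj[OF x] by blast
  then have "invertible (J x)" using invertible_left_inverse by blast
  then show ?thesis using invertible_det_nz by blast
qed

definition Ji :: "real^4 \<Rightarrow> real^4^4" where
  "Ji x = (\<chi> k j. det (\<chi> i l. if l = k then (axis j 1 :: real^4) $ i else J x $ i $ l) / det (J x))"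

lemma J_Ji: "x \<in> Ann \<Longrightarrow> J x ** Ji x = mat 1"
proof -
  assume x: "x \<in> Ann"
  have c: "J x *v (\<chi> k. Ji x $ k $ j) = axis j 1" for j
    using cramer[OF det_J[OF x], of "\<chi> k. Ji x $ k $ j" "axis j 1"] by (simp add: Ji_def)
  have "(J x ** Ji x) $ i $ j = mat 1 $ i $ j" for i j
  proof -
    have "(J x ** Ji x) $ i $ j = (J x *v (\<chi> k. Ji x $ k $ j)) $ i"
      by (simp add: matrix_matrix_mult_def matrix_vector_mult_def)
    also have "\<dots> = (axis j 1 :: real^4) $ i" unfolding c ..
    also have "\<dots> = mat 1 $ i $ j" by (simp add: axis_def mat_def)
    finally show ?thesis .
  qed
  then show ?thesis by (simp add: vec_eq_iff)
qed

lemma Ji_J: "x \<in> Ann \<Longrightarrow> Ji x ** J x = mat 1"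
  using J_Ji matrix_left_right_inverse by blast


lemma axis_basis: "axis j (1::real) \<in> (Basis :: (real^'n) set)"
  by (auto simp: Basis_vec_def)

lemma smooth_J: "smooth_fun Ann (\<lambda>x. J x $ i $ j)"
  unfolding J_def using smooth_funD(2)[OF smooth_Phi axis_basis] by simp

lemma smooth_det:
  fixes M :: "'a::euclidean_space \<Rightarrow> real^'n^'n"
  assumes U: "open U" and M: "\<And>i j. smooth_fun U (\<lambda>x. M x $ i $ j)"
  shows "smooth_fun U (\<lambda>x. det (M x))"
  unfolding det_def
  apply (rule smooth_sum[OF U])
   apply (simp add: finite_permutations)
  apply (rule smooth_mult[OF U smooth_const])
  apply (rule smooth_prod[OF U])
  using M by auto

lemma smooth_Ji: "smooth_fun Ann (\<lambda>x. Ji x $ k $ j)"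
proof -
  have "smooth_fun Ann (\<lambda>x. det (\<chi> i l. if l = k then (axis j 1 :: real^4) $ i else J x $ i $ l))"
  proof (rule smooth_det[OF open_Ann])
    fix i l
    show "smooth_fun Ann (\<lambda>x. (\<chi> i l. if l = k then (axis j 1 :: real^4) $ i else J x $ i $ l) $ i $ l)"
      by (cases "l = k") (simp_all add: smooth_const smooth_J)
  qed
  moreover have "smooth_fun Ann (\<lambda>x. det (J x))" by (rule smooth_det[OF open_Ann smooth_J])
  ultimately show ?thesis unfolding Ji_def using det_J
    by (simp add: smooth_divide[OF open_Ann])
qed

definition Gm :: "real^4 \<Rightarrow> real^4^4" where
  "Gm x = transpose (Ji x) ** Ji x"

lemma Gm_form: "a \<bullet> (Gm x *v b) = (Ji x *v a) \<bullet> (Ji x *v b)"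
  unfolding Gm_def matrix_vector_mul_assoc[symmetric] transpose_matrix_vector
  by (metis dot_lmul_matrix inner_commute)

lemma mat_from_form: "(\<And>a b. a \<bullet> ((A::real^'n^'n) *v b) = a \<bullet> (B *v b)) \<Longrightarrow> A = B"
proof -
  assume h: "\<And>a b. a \<bullet> (A *v b) = a \<bullet> (B *v b)"
  have "A *v b = B *v b" for b
  proof -
    have "(A *v b - B *v b) \<bullet> (A *v b - B *v b) = 0"
      using h[of "A *v b - B *v b" b] by (simp add: inner_diff_right inner_diff_left inner_commute)
    then show ?thesis by simp
  qed
  then show ?thesis using matrix_eq by blast
qed

lemma smooth_Gm: "smooth_fun Ann (\<lambda>x. Gm x $ i $ j)"
proof -
  have "Gm x $ i $ j = (\<Sum>k\<in>UNIV. Ji x $ k $ i * Ji x $ k $ j)" for x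
    by (simp add: Gm_def matrix_matrix_mult_def transpose_def)
  moreover have "smooth_fun Ann (\<lambda>x. \<Sum>k\<in>UNIV. Ji x $ k $ i * Ji x $ k $ j)"
    by (intro smooth_sum[OF open_Ann] smooth_mult[OF open_Ann] smooth_Ji) auto
  ultimately show ?thesis by simp
qed

lemma Ji_apply_inj: "x \<in> Ann \<Longrightarrow> J x *v z = a \<Longrightarrow> Ji x *v a = z"
  using Ji_J by (metis matrix_vector_mul_assoc matrix_vector_mul_lid)

lemma bl_hmul: "bounded_linear (hmul q)"
  using hmul_linear2 linear_conv_bounded_linear by blast

lemma Phi_Q8: "q \<in> Q8 \<Longrightarrow> Phi (hmul q z) = Phi z"
  unfolding Phi_def using Psi_Q8 by simp

lemma Ann_Q8: "q \<in> Q8 \<Longrightarrow> x \<in> Ann \<Longrightarrow> hmul q x \<in> Ann"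
proof -
  assume q: "q \<in> Q8" and x: "x \<in> Ann"
  have "norm (hmul q x) ^ 2 = norm x ^ 2" using nsq_hmul[of q x] nsq_Q8[OF q] by (simp add: nsq_norm)
  then have "norm (hmul q x) = norm x" by (simp add: power2_eq_iff_nonneg)
  then show ?thesis using x by (simp add: Ann_def)
qed

lemma J_Q8: "q \<in> Q8 \<Longrightarrow> x \<in> Ann \<Longrightarrow> J (hmul q x) *v hmul q v = J x *v v"
proof -
  assume q: "q \<in> Q8" and x: "x \<in> Ann"
  have qx: "hmul q x \<in> Ann" by (rule Ann_Q8[OF q x])
  have "((\<lambda>z. Phi (hmul q z)) has_derivative (\<lambda>v. J (hmul q x) *v hmul q v)) (at x)"
    using has_derivative_compose[OF bounded_linear_imp_has_derivative[OF bl_hmul] Phi_hasderiv[OF qx]] .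
  moreover have "(\<lambda>z. Phi (hmul q z)) = Phi" using Phi_Q8[OF q] by auto
  ultimately have "((Phi) has_derivative (\<lambda>v. J (hmul q x) *v hmul q v)) (at x)" by simp
  from has_derivative_unique[OF this Phi_hasderiv[OF x]] show ?thesis by metis
qed

lemma Gm_Q8: "q \<in> Q8 \<Longrightarrow> x \<in> Ann \<Longrightarrow> Gm (hmul q x) = Gm x"
proof (rule mat_from_form)
  fix a b assume q: "q \<in> Q8" and x: "x \<in> Ann"
  have qx: "hmul q x \<in> Ann" by (rule Ann_Q8[OF q x])
  have e: "Ji (hmul q x) *v c = hmul q (Ji x *v c)" for c
  proof (rule Ji_apply_inj[OF qx])
    show "J (hmul q x) *v hmul q (Ji x *v c) = c"
      unfolding J_Q8[OF q x] using J_Ji[OF x] by (simp add: matrix_vector_mul_assoc)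
  qed
  show "a \<bullet> (Gm (hmul q x) *v b) = a \<bullet> (Gm x *v b)"
    unfolding Gm_form e hmul_inner nsq_Q8[OF q] by simp
qed

definition gmet :: "real^4 \<Rightarrow> real^4^4" where
  "gmet y = Gm (SOME x. x \<in> Ann \<and> Phi x = y)"

lemma gmet_Phi: "x \<in> Ann \<Longrightarrow> gmet (Phi x) = Gm x"
proof -
  assume x: "x \<in> Ann"
  define x' where "x' = (SOME x'. x' \<in> Ann \<and> Phi x' = Phi x)"
  have "x' \<in> Ann \<and> Phi x' = Phi x" unfolding x'_def by (rule someI[of _ x]) (use x in simp)
  then obtain q where q: "q \<in> Q8" "x' = hmul q x"
    using fiber[OF Ann_nsq[OF x] Ann_nsq] by metis
  show ?thesis unfolding gmet_def x'_def[symmetric] q(2) using Gm_Q8[OF q(1) x] .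
qed

lemma metric_id: "x \<in> Ann \<Longrightarrow> metric_apply (gmet (Phi x)) (frechet_derivative Phi (at x) v) (frechet_derivative Phi (at x) w) = cone_metric 1 x v w"
proof -
  assume x: "x \<in> Ann"
  have "metric_apply (gmet (Phi x)) (frechet_derivative Phi (at x) v) (frechet_derivative Phi (at x) w)
      = (Ji x *v (J x *v v)) \<bullet> (Ji x *v (J x *v w))"
    unfolding metric_apply_def gmet_Phi[OF x] DPhi_eq[OF x] Gm_form ..
  also have "\<dots> = v \<bullet> w" using Ji_J[OF x] by (simp add: matrix_vector_mul_assoc)
  also have "\<dots> = cone_metric 1 x v w" unfolding cone_metric_def by simp
  finally show ?thesis .
qed

lemma Gm_sym: "transpose (Gm x) = Gm x"
  unfolding Gm_def by (simp add: matrix_transpose_mul)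

lemma Gm_pos: "x \<in> Ann \<Longrightarrow> v \<noteq> 0 \<Longrightarrow> v \<bullet> (Gm x *v v) > 0"
proof -
  assume x: "x \<in> Ann" and v: "v \<noteq> 0"
  have "Ji x *v v \<noteq> 0"
  proof
    assume "Ji x *v v = 0"
    then have "J x *v (Ji x *v v) = 0" by simp
    then show False using J_Ji[OF x] v by (simp add: matrix_vector_mul_assoc)
  qed
  then show ?thesis unfolding Gm_form by simp
qed


lemma cont_Phi: "S \<subseteq> Ann \<Longrightarrow> continuous_on S Phi"
  by (meson Phi_hasderiv continuous_at_imp_continuous_on has_derivative_continuous subsetD)

lemma bl_mv: "bounded_linear (\<lambda>v. (A::real^'n^'m) *v v)"
  using matrix_vector_mul_linear linear_conv_bounded_linear by blast

lemma open_image: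
  assumes S: "open S" "S \<subseteq> Ann"
  shows "open (Phi ` S)"
proof -
  have "y \<in> interior (Phi ` S)" if "y \<in> Phi ` S" for y
  proof -
    obtain x where x: "x \<in> S" "y = Phi x" using \<open>y \<in> Phi ` S\<close> by blast
    have xA: "x \<in> Ann" using x S by blast
    have "(\<lambda>v. J x *v v) \<circ> (\<lambda>v. Ji x *v v) = id"
      using J_Ji[OF xA] by (auto simp: matrix_vector_mul_assoc)
    then have "Phi x \<in> interior (Phi ` S)"
      using sussmann_open_mapping[OF S(1) cont_Phi[OF S(2)] x(1) Phi_hasderiv[OF xA] bl_mv _ subset_refl]
        interior_open[OF S(1)] x(1) by simp
    then show ?thesis using x by simp
  qed
  then have "Phi ` S \<subseteq> interior (Phi ` S)" by blast
  then show ?thesis using interior_subset by (metis open_interior subset_antisym)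
qed

lemma hmul_minus: "hmul q x - x = hmul (q - vector [1,0,0,0]) x"
  unfolding vec4_eq by (simp add: algebra_simps)

lemma nsq_Q8_sub: "q \<in> Q8 \<Longrightarrow> q \<noteq> vector [1,0,0,0] \<Longrightarrow> nsq (q - vector [1,0,0,0]) \<ge> 2"
  unfolding Q8_def by (auto simp: nsq_def)

lemma local_inj:
  assumes x0: "x0 \<in> Ann"
  shows "inj_on Phi (ball x0 (norm x0 / 4) \<inter> Ann)"
proof (rule inj_onI)
  fix x y assume x: "x \<in> ball x0 (norm x0 / 4) \<inter> Ann" and y: "y \<in> ball x0 (norm x0 / 4) \<inter> Ann"
    and e: "Phi x = Phi y"
  obtain q where q: "q \<in> Q8" "y = hmul q x" using fiber[OF Ann_nsq Ann_nsq] x y e by blast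
  show "x = y"
  proof (cases "q = vector [1,0,0,0]")
    case True
    then show ?thesis using q hmul_one by simp
  next
    case False
    define n0 where "n0 = norm x0"
    have dx: "norm (x0 - x) < n0 / 4" using x by (simp add: dist_norm n0_def)
    have dy: "norm (x0 - y) < n0 / 4" using y by (simp add: dist_norm n0_def)
    have "norm (y - x) \<le> norm (x0 - y) + norm (x0 - x)" by (metis norm_diff_triangle_le norm_minus_commute order_refl)
    then have a: "norm (y - x) < n0 / 2" using dx dy by linarith
    have "n0 \<le> norm x + norm (x0 - x)" by (metis n0_def norm_triangle_sub add.commute)
    then have b: "norm x > 3 * n0 / 4" using dx by linarith
    have n0p: "n0 \<ge> 0" by (simp add: n0_def)
    have "norm (y - x) ^ 2 = nsq (q - vector [1,0,0,0]) * norm x ^ 2"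
      unfolding q(2) hmul_minus nsq_norm[symmetric] nsq_hmul ..
    also have "\<dots> \<ge> 2 * norm x ^ 2" using nsq_Q8_sub[OF q(1) False] by (simp add: mult_right_mono)
    finally have c: "norm (y - x) ^ 2 \<ge> 2 * norm x ^ 2" .
    have "(3 * n0 / 4) ^ 2 < norm x ^ 2" using b n0p by (intro power_strict_mono) auto
    moreover have "norm (y - x) ^ 2 < (n0 / 2) ^ 2" using a by (intro power_strict_mono) auto
    ultimately have "9 * n0^2 < 16 * norm x ^2" "4 * norm (y-x)^2 < n0^2"
      by (simp_all add: power_divide power_mult_distrib)
    moreover have "n0^2 \<ge> 0" by simp
    ultimately have False using c by linarith
    then show ?thesis ..
  qed
qed

lemma smooth_gmet: "smooth_fun (Phi ` Ann) (\<lambda>y. gmet y $ i $ j)"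
proof (rule smooth_local)
  fix y assume "y \<in> Phi ` Ann"
  then obtain x0 where x0: "x0 \<in> Ann" "y = Phi x0" by blast
  define S where "S = ball x0 (norm x0 / 4) \<inter> Ann"
  have oS: "open S" unfolding S_def using open_Ann by blast
  have SA: "S \<subseteq> Ann" unfolding S_def by blast
  have n0: "norm x0 > 0" using x0(1) Ann_nsq by (force simp: nsq_norm)
  have x0S: "x0 \<in> S" unfolding S_def using x0 n0 by simp
  have inj: "inj_on Phi S" unfolding S_def by (rule local_inj[OF x0(1)])
  define W where "W = Phi ` S"
  have oW: "open W" unfolding W_def by (rule open_image[OF oS SA])
  define G where "G = inv_into S Phi"
  have GS: "G z \<in> S" if "z \<in> W" for z using that unfolding W_def G_def by (simp add: inv_into_into)
  have PG: "Phi (G z) = z" if "z \<in> W" for z using that unfolding W_def G_def by (simp add: f_inv_into_f)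
  have GP: "G (Phi x) = x" if "x \<in> S" for x using that inj unfolding G_def by simp
  have dG: "(G has_derivative (\<lambda>v. Ji (G z) *v v)) (at z)" if z: "z \<in> W" for z
  proof -
    have GzA: "G z \<in> Ann" using GS[OF z] SA by blast
    have "(\<lambda>v. J (G z) *v v) \<circ> (\<lambda>v. Ji (G z) *v v) = id"
      using J_Ji[OF GzA] by (auto simp: matrix_vector_mul_assoc)
    from has_derivative_inverse_strong[OF oS GS[OF z] cont_Phi[OF SA] GP Phi_hasderiv[OF GzA] this]
    show ?thesis using PG[OF z] by simp
  qed
  have "smooth_fun W (\<lambda>z. Gm (G z) $ i $ j)"
  proof (rule smooth_compose[where G=G and G'="\<lambda>z v. Ji (G z) *v v" and m="\<lambda>k b x. (Ji x *v b) \<bullet> k" and h="\<lambda>x. Gm x $ i $ j", OF oW oS])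
    show "\<forall>z\<in>W. G z \<in> S" using GS by blast
    show "\<forall>z\<in>W. (G has_derivative (\<lambda>v. Ji (G z) *v v)) (at z)" using dG by blast
    show "\<forall>k\<in>Basis. \<forall>b\<in>Basis. smooth_fun S (\<lambda>x. (Ji x *v b) \<bullet> k) \<and> (\<forall>z\<in>W. (Ji (G z) *v b) \<bullet> k = (Ji (G z) *v b) \<bullet> k)"
    proof (intro ballI conjI)
      fix k b :: "real^4" assume k: "k \<in> Basis" and b: "b \<in> Basis"
      obtain a where a: "k = axis a 1" using k by (auto simp: Basis_vec_def)
      obtain c where c: "b = axis c 1" using b by (auto simp: Basis_vec_def)
      have "(\<lambda>x. (Ji x *v b) \<bullet> k) = (\<lambda>x. Ji x $ a $ c)"
        unfolding a c by (simp add: inner_axis matrix_vector_mult_basis column_def)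
      then show "smooth_fun S (\<lambda>x. (Ji x *v b) \<bullet> k)" using smooth_subset[OF smooth_Ji SA] by simp
    qed simp
    show "smooth_fun S (\<lambda>x. Gm x $ i $ j)" using smooth_subset[OF smooth_Gm SA] .
  qed
  moreover have "Gm (G z) $ i $ j = gmet z $ i $ j" if "z \<in> W" for z
    using gmet_Phi[of "G z"] PG[OF that] GS[OF that] SA by auto
  ultimately have "smooth_fun W (\<lambda>y. gmet y $ i $ j)" by (rule smooth_cong[OF oW])
  moreover have "y \<in> W" unfolding W_def using x0 x0S by blast
  moreover have "W \<subseteq> Phi ` Ann" unfolding W_def using SA by blast
  ultimately show "\<exists>W. open W \<and> y \<in> W \<and> W \<subseteq> Phi ` Ann \<and> smooth_fun W (\<lambda>y. gmet y $ i $ j)"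
    using oW by blast
qed

theorem proposition2p3:
  shows "\<exists>(U :: (real^4) set) g K c \<Phi>.
     open U \<and> riem_metric4 U g \<and> compact K \<and> K \<subseteq> U \<and> c > 0 \<and>
     smooth_map4 {x. norm x > exp 200} \<Phi> \<and>
     \<Phi> ` {x. norm x > exp 200} = U - K \<and>
     (\<forall>x\<in>{x. norm x > exp 200}. \<forall>y\<in>{x. norm x > exp 200}.
         \<Phi> x = \<Phi> y \<longleftrightarrow> (\<exists>q\<in>Q8. y = hmul q x)) \<and>
     (\<forall>x\<in>{x. norm x > exp 200}. \<forall>v w.
         metric_apply (g (\<Phi> x)) (frechet_derivative \<Phi> (at x) v) (frechet_derivative \<Phi> (at x) w)
           = cone_metric c x v w)"
proof (intro exI conjI)
  show "open (Phi ` Ann)" by (rule open_image[OF open_Ann subset_refl])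
  show "riem_metric4 (Phi ` Ann) gmet"
    unfolding riem_metric4_def
  proof (intro conjI allI ballI impI)
    fix i j show "smooth_fun (Phi ` Ann) (\<lambda>x. gmet x $ i $ j)" by (rule smooth_gmet)
  next
    fix y assume "y \<in> Phi ` Ann"
    then obtain x where x: "x \<in> Ann" "y = Phi x" by blast
    show "transpose (gmet y) = gmet y" unfolding x(2) gmet_Phi[OF x(1)] by (rule Gm_sym)
    fix v :: "real^4" assume "v \<noteq> 0"
    then show "v \<bullet> (gmet y *v v) > 0" unfolding x(2) gmet_Phi[OF x(1)] by (rule Gm_pos[OF x(1)])
  qed
  show "compact ({} :: (real^4) set)" by simp
  show "{} \<subseteq> Phi ` Ann" by simp
  show "(1::real) > 0" by simp
  show "smooth_map4 {x. norm x > exp 200} Phi"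
    unfolding smooth_map4_def Ann_def[symmetric] using smooth_Phi by simp
  show "Phi ` {x. norm x > exp 200} = Phi ` Ann - {}" by (simp add: Ann_def)
  show "\<forall>x\<in>{x. norm x > exp 200}. \<forall>y\<in>{x. norm x > exp 200}. Phi x = Phi y \<longleftrightarrow> (\<exists>q\<in>Q8. y = hmul q x)"
    unfolding Ann_def[symmetric] using fiber[OF Ann_nsq Ann_nsq] by blast
  show "\<forall>x\<in>{x. norm x > exp 200}. \<forall>v w. metric_apply (gmet (Phi x)) (frechet_derivative Phi (at x) v) (frechet_derivative Phi (at x) w) = cone_metric 1 x v w"
    unfolding Ann_def[symmetric] using metric_id by simp
qed


end
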